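(* Let $(M,\eta)$ be a set operad with natural Hopf algebra $\mathcal N_M$ and antipode $S$, and let $\omega:\mathcal N_M\to\mathcal A$ be an algebra homomorphism into a commutative $\mathbb K$-algebra $\mathcal A$. Then $M^{\omega\circ S}(x)$ is the compositional (substitutional) inverse of $M^{\omega}(x)$. In particular, taking $\mathcal A=\mathcal N_M$ and $\omega=I$ the identity, $M^S(x)=(M^I(x))^{\langle-1\rangle}$.
   Context: $\mathcal N_M$ is the polynomial algebra $\mathbb K[t_\alpha]$ indexed by types of $M$-structures, with $t_\bullet=1$ ($\bullet$ the singleton type). Its coproduct is $\Delta(t_{\tau(m)})=\sum_{\eta(a,m')=m}t_{\tau(a)}\otimes t_{\tau(m')}$, the sum over $(a,m')\in M(M)[U]$, with $t_{\tau(a)}=\prod_B t_{\tau(m_B)}$ for an assembly $a$. For an algebra homomorphism $\omega$ into $\mathcal A$, $M^\omega(x)=x+\sum_{n\ge2}\big(\sum_{m\in M[[n]]}\omega(t_{\tau(m)})\big)\frac{x^n}{n!}$. $f^{\langle-1\rangle}$ denotes the compositional inverse of a power series $f=x+O(x^2)$. *)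

theory Defs
  imports "HOL-Library.Poly_Mapping" "HOL-Library.Disjoint_Sets" "HOL-Library.FuncSet"
    "HOL-Computational_Algebra.Formal_Power_Series"
begin

text \<open>A species is given by M :: nat set => 'm set (the structures on a finite label set U)
  together with transport of structures rl sigma U m along a bijection sigma : U -> V.\<close>

definition species :: "(nat set \<Rightarrow> 'm set) \<Rightarrow> ((nat \<Rightarrow> nat) \<Rightarrow> nat set \<Rightarrow> 'm \<Rightarrow> 'm) \<Rightarrow> bool" where
  "species M rl \<longleftrightarrow>
     (\<forall>U. finite U \<longrightarrow> finite (M U)) \<and>
     (\<forall>U m. finite U \<longrightarrow> m \<in> M U \<longrightarrow> rl (\<lambda>x. x) U m = m) \<and>
     (\<forall>\<sigma> U V m. finite U \<longrightarrow> bij_betw \<sigma> U V \<longrightarrow> m \<in> M U \<longrightarrow> rl \<sigma> U m \<in> M V) \<and>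
     (\<forall>\<sigma> \<tau> U V W m. finite U \<longrightarrow> bij_betw \<sigma> U V \<longrightarrow> bij_betw \<tau> V W \<longrightarrow> m \<in> M U \<longrightarrow>
          rl (\<tau> \<circ> \<sigma>) U m = rl \<tau> V (rl \<sigma> U m)) \<and>
     (\<forall>\<sigma> \<sigma>' U m. (\<forall>x\<in>U. \<sigma> x = \<sigma>' x) \<longrightarrow> rl \<sigma> U m = rl \<sigma>' U m)"

definition blk :: "nat set set \<Rightarrow> nat \<Rightarrow> nat set" where
  "blk \<pi> x = (THE B. B \<in> \<pi> \<and> x \<in> B)"

text \<open>The blocks of pi are canonically labelled by their minima, so M(M)[U] consists of
  an assembly (pi, f) together with an M-structure on the label set Min ` pi.\<close>
definition assemblies :: "(nat set \<Rightarrow> 'm set) \<Rightarrow> nat set \<Rightarrow> (nat set set \<times> (nat set \<Rightarrow> 'm)) set" where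
  "assemblies M U = {(\<pi>, f). partition_on U \<pi> \<and> f \<in> extensional \<pi> \<and> (\<forall>B\<in>\<pi>. f B \<in> M B)}"

definition compM :: "(nat set \<Rightarrow> 'm set) \<Rightarrow> nat set \<Rightarrow> ((nat set set \<times> (nat set \<Rightarrow> 'm)) \<times> 'm) set" where
  "compM M U = {(a, m'). a \<in> assemblies M U \<and> m' \<in> M (Min ` fst a)}"

text \<open>A set operad (M, eta): a monoid in species under substitution, with unit X,
  M[{}] empty and M[{u}] a single element (the unit).\<close>

definition set_operad ::
  "(nat set \<Rightarrow> 'm set) \<Rightarrow> ((nat \<Rightarrow> nat) \<Rightarrow> nat set \<Rightarrow> 'm \<Rightarrow> 'm)
   \<Rightarrow> (nat set set \<times> (nat set \<Rightarrow> 'm) \<Rightarrow> 'm \<Rightarrow> 'm) \<Rightarrow> bool" where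
  "set_operad M rl \<eta> \<longleftrightarrow>
     species M rl \<and>
     M {} = {} \<and>
     (\<forall>u. \<exists>e. M {u} = {e}) \<and>
     \<comment> \<open>eta maps M(M)[U] to M[U]\<close>
     (\<forall>U a m'. finite U \<longrightarrow> (a, m') \<in> compM M U \<longrightarrow> \<eta> a m' \<in> M U) \<and>
     \<comment> \<open>naturality of eta\<close>
     (\<forall>\<sigma> U V \<pi> f m'. finite U \<longrightarrow> bij_betw \<sigma> U V \<longrightarrow> ((\<pi>, f), m') \<in> compM M U \<longrightarrow>
        rl \<sigma> U (\<eta> (\<pi>, f) m') =
        \<eta> ((`) \<sigma> ` \<pi>,
            restrict (\<lambda>B'. rl \<sigma> (inv_into U \<sigma> ` B') (f (inv_into U \<sigma> ` B'))) ((`) \<sigma> ` \<pi>))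
          (rl (\<lambda>x. Min (\<sigma> ` blk \<pi> x)) (Min ` \<pi>) m')) \<and>
     \<comment> \<open>left unit law\<close>
     (\<forall>U m. finite U \<longrightarrow> U \<noteq> {} \<longrightarrow> m \<in> M U \<longrightarrow>
        \<eta> ((\<lambda>u. {u}) ` U, restrict (\<lambda>B. the_elem (M B)) ((\<lambda>u. {u}) ` U)) m = m) \<and>
     \<comment> \<open>right unit law\<close>
     (\<forall>U m. finite U \<longrightarrow> U \<noteq> {} \<longrightarrow> m \<in> M U \<longrightarrow>
        \<eta> ({U}, restrict (\<lambda>_. m) {U}) (the_elem (M {Min U})) = m) \<and>
     \<comment> \<open>associativity: eta o (M o eta) = eta o (eta o M) on M(M(M))[U]\<close>
     (\<forall>U \<pi> \<sigma> g h m''. finite U \<longrightarrow> partition_on U \<pi> \<longrightarrow>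
        (\<forall>B\<in>\<pi>. (\<sigma> B, g B) \<in> assemblies M B \<and> h B \<in> M (Min ` \<sigma> B)) \<longrightarrow>
        m'' \<in> M (Min ` \<pi>) \<longrightarrow>
        \<eta> (\<pi>, restrict (\<lambda>B. \<eta> (\<sigma> B, g B) (h B)) \<pi>) m'' =
        \<eta> (\<Union>(\<sigma> ` \<pi>), restrict (\<lambda>C. g (blk \<pi> (Min C)) C) (\<Union>(\<sigma> ` \<pi>)))
          (\<eta> ((\<lambda>B. Min ` \<sigma> B) ` \<pi>,
               restrict (\<lambda>D. h (blk \<pi> (Min D))) ((\<lambda>B. Min ` \<sigma> B) ` \<pi>)) m''))"

definition tp :: "((nat \<Rightarrow> nat) \<Rightarrow> nat set \<Rightarrow> 'm \<Rightarrow> 'm) \<Rightarrow> nat set \<Rightarrow> 'm \<Rightarrow> (nat set \<times> 'm) set" where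
  "tp rl U m = {(V, rl \<sigma> U m) | \<sigma> V. bij_betw \<sigma> U V}"

definition types :: "(nat set \<Rightarrow> 'm set) \<Rightarrow> ((nat \<Rightarrow> nat) \<Rightarrow> nat set \<Rightarrow> 'm \<Rightarrow> 'm) \<Rightarrow> (nat set \<times> 'm) set set" where
  "types M rl = {tp rl U m | U m. finite U \<and> m \<in> M U}"

definition dot :: "(nat set \<Rightarrow> 'm set) \<Rightarrow> ((nat \<Rightarrow> nat) \<Rightarrow> nat set \<Rightarrow> 'm \<Rightarrow> 'm) \<Rightarrow> (nat set \<times> 'm) set" where
  "dot M rl = tp rl {1} (the_elem (M {1}))"

type_synonym ('v, 'k) mpoly = "('v \<Rightarrow>\<^sub>0 nat) \<Rightarrow>\<^sub>0 'k"

definition pconst :: "'k::zero \<Rightarrow> ('v, 'k) mpoly" where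
  "pconst c = Poly_Mapping.single 0 c"

definition pvar :: "'v \<Rightarrow> ('v, 'k::{zero,one}) mpoly" where
  "pvar v = Poly_Mapping.single (Poly_Mapping.single v 1) 1"

definition peval :: "('v \<Rightarrow> 'a::comm_semiring_1) \<Rightarrow> ('k::zero \<Rightarrow> 'a) \<Rightarrow> ('v, 'k) mpoly \<Rightarrow> 'a" where
  "peval \<phi> c p = (\<Sum>mn\<in>Poly_Mapping.keys p. c (Poly_Mapping.lookup p mn) * (\<Prod>v\<in>Poly_Mapping.keys mn. \<phi> v ^ Poly_Mapping.lookup mn v))"

text \<open>N_M = K[t_alpha] with t_bullet = 1, realized as the subalgebra of polynomials in the
  variables t_alpha, alpha ranging over the types different from bullet.\<close>
definition NM :: "(nat set \<Rightarrow> 'm set) \<Rightarrow> ((nat \<Rightarrow> nat) \<Rightarrow> nat set \<Rightarrow> 'm \<Rightarrow> 'm)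
   \<Rightarrow> ((nat set \<times> 'm) set, 'k::zero) mpoly set" where
  "NM M rl = {p. \<forall>mn\<in>Poly_Mapping.keys p. \<forall>\<alpha>\<in>Poly_Mapping.keys mn. \<alpha> \<in> types M rl \<and> \<alpha> \<noteq> dot M rl}"

definition tvar :: "(nat set \<Rightarrow> 'm set) \<Rightarrow> ((nat \<Rightarrow> nat) \<Rightarrow> nat set \<Rightarrow> 'm \<Rightarrow> 'm)
   \<Rightarrow> (nat set \<times> 'm) set \<Rightarrow> ((nat set \<times> 'm) set, 'k::comm_semiring_1) mpoly" where
  "tvar M rl \<alpha> = (if \<alpha> = dot M rl then 1 else pvar \<alpha>)"

text \<open>N_M tensor N_M realized as K[t_alpha (x) 1, 1 (x) t_alpha]:
  variable (alpha, True) is t_alpha (x) 1, variable (alpha, False) is 1 (x) t_alpha.\<close>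
definition tvar2 :: "(nat set \<Rightarrow> 'm set) \<Rightarrow> ((nat \<Rightarrow> nat) \<Rightarrow> nat set \<Rightarrow> 'm \<Rightarrow> 'm)
   \<Rightarrow> (nat set \<times> 'm) set \<Rightarrow> bool \<Rightarrow> ((nat set \<times> 'm) set \<times> bool, 'k::comm_semiring_1) mpoly" where
  "tvar2 M rl \<alpha> b = (if \<alpha> = dot M rl then 1 else pvar (\<alpha>, b))"

definition coprod_str ::
  "(nat set \<Rightarrow> 'm set) \<Rightarrow> ((nat \<Rightarrow> nat) \<Rightarrow> nat set \<Rightarrow> 'm \<Rightarrow> 'm)
   \<Rightarrow> (nat set set \<times> (nat set \<Rightarrow> 'm) \<Rightarrow> 'm \<Rightarrow> 'm) \<Rightarrow> nat set \<Rightarrow> 'm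
   \<Rightarrow> ((nat set \<times> 'm) set \<times> bool, 'k::comm_semiring_1) mpoly" where
  "coprod_str M rl \<eta> U m =
     (\<Sum>((\<pi>, f), m') \<in> {((\<pi>, f), m') \<in> compM M U. \<eta> (\<pi>, f) m' = m}.
        (\<Prod>B\<in>\<pi>. tvar2 M rl (tp rl B (f B)) True) * tvar2 M rl (tp rl (Min ` \<pi>) m') False)"

text \<open>The coproduct, extended as an algebra homomorphism (using any representative of a type).\<close>
definition coprod ::
  "(nat set \<Rightarrow> 'm set) \<Rightarrow> ((nat \<Rightarrow> nat) \<Rightarrow> nat set \<Rightarrow> 'm \<Rightarrow> 'm)
   \<Rightarrow> (nat set set \<times> (nat set \<Rightarrow> 'm) \<Rightarrow> 'm \<Rightarrow> 'm)
   \<Rightarrow> ((nat set \<times> 'm) set, 'k::comm_semiring_1) mpoly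
   \<Rightarrow> ((nat set \<times> 'm) set \<times> bool, 'k) mpoly" where
  "coprod M rl \<eta> p = peval (\<lambda>\<alpha>. case (SOME x. x \<in> \<alpha>) of (U, m) \<Rightarrow> coprod_str M rl \<eta> U m) pconst p"

definition counit :: "('v, 'k::zero) mpoly \<Rightarrow> 'k" where
  "counit p = Poly_Mapping.lookup p 0"

text \<open>K-algebra homomorphisms from N_M into a commutative K-algebra A
  (the K-algebra structure of A being the ring homomorphism ofk : K -> A).\<close>
definition alg_hom_on :: "((nat set \<times> 'm) set, 'k::comm_ring_1) mpoly set \<Rightarrow> ('k \<Rightarrow> 'a::comm_ring_1)
   \<Rightarrow> (((nat set \<times> 'm) set, 'k) mpoly \<Rightarrow> 'a) \<Rightarrow> bool" where
  "alg_hom_on N ofk \<omega> \<longleftrightarrow>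
     \<omega> 1 = 1 \<and>
     (\<forall>p\<in>N. \<forall>q\<in>N. \<omega> (p + q) = \<omega> p + \<omega> q \<and> \<omega> (p * q) = \<omega> p * \<omega> q) \<and>
     (\<forall>c. \<forall>p\<in>N. \<omega> (pconst c * p) = ofk c * \<omega> p)"

definition ring_hom_k :: "('k::comm_ring_1 \<Rightarrow> 'a::comm_ring_1) \<Rightarrow> bool" where
  "ring_hom_k ofk \<longleftrightarrow> ofk 1 = 1 \<and> (\<forall>a b. ofk (a + b) = ofk a + ofk b \<and> ofk (a * b) = ofk a * ofk b)"

text \<open>The antipode S of N_M: the algebra endomorphism of N_M with
  mult o (S (x) id) o Delta = unit o counit.\<close>
definition is_antipode ::
  "(nat set \<Rightarrow> 'm set) \<Rightarrow> ((nat \<Rightarrow> nat) \<Rightarrow> nat set \<Rightarrow> 'm \<Rightarrow> 'm)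
   \<Rightarrow> (nat set set \<times> (nat set \<Rightarrow> 'm) \<Rightarrow> 'm \<Rightarrow> 'm)
   \<Rightarrow> (((nat set \<times> 'm) set, 'k::comm_ring_1) mpoly \<Rightarrow> ((nat set \<times> 'm) set, 'k) mpoly) \<Rightarrow> bool" where
  "is_antipode M rl \<eta> S \<longleftrightarrow>
     S ` NM M rl \<subseteq> NM M rl \<and> alg_hom_on (NM M rl) pconst S \<and>
     (\<forall>p\<in>NM M rl.
        peval (\<lambda>(\<alpha>, b). if b then S (tvar M rl \<alpha>) else tvar M rl \<alpha>) pconst (coprod M rl \<eta> p)
        = pconst (counit p))"

definition Mser :: "(nat set \<Rightarrow> 'm set) \<Rightarrow> ((nat \<Rightarrow> nat) \<Rightarrow> nat set \<Rightarrow> 'm \<Rightarrow> 'm)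
   \<Rightarrow> ('k::field_char_0 \<Rightarrow> 'a::comm_ring_1)
   \<Rightarrow> (((nat set \<times> 'm) set, 'k) mpoly \<Rightarrow> 'a) \<Rightarrow> 'a fps" where
  "Mser M rl ofk \<omega> = Abs_fps (\<lambda>n.
      if n = 1 then 1
      else if n \<ge> 2 then (\<Sum>m\<in>M {1..n}. \<omega> (tvar M rl (tp rl {1..n} m))) * ofk (1 / fact n)
      else 0)"

end

theory Submission
  imports Defs
begin

unbundle fps_syntax


lemma poly_mapping_sum_singles:
  "p = (\<Sum>a\<in>Poly_Mapping.keys p. Poly_Mapping.single a (Poly_Mapping.lookup p a))"
  by (rule poly_mapping_eqI)
     (simp add: lookup_sum lookup_single when_def in_keys_iff sum.delta' split: if_splits)

lemma pconst_0[simp]: "pconst 0 = 0" by (simp add: pconst_def)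
lemma pconst_1[simp]: "pconst 1 = 1" by (simp add: pconst_def)
lemma pconst_add: "pconst (a + b) = pconst a + pconst b"
  by (simp add: pconst_def single_add)
lemma pconst_mult: "pconst ((a::'k::comm_semiring_1) * b) = pconst a * pconst b"
  by (simp add: pconst_def mult_single)
lemma pconst_uminus: "pconst (-(a::'k::comm_ring_1)) = - pconst a"
  by (simp add: pconst_def single_uminus)
lemma pconst_diff: "pconst ((a::'k::comm_ring_1) - b) = pconst a - pconst b"
  by (simp add: pconst_def single_diff)

definition monv :: "('v \<Rightarrow> 'a::comm_semiring_1) \<Rightarrow> ('v \<Rightarrow>\<^sub>0 nat) \<Rightarrow> 'a" where
  "monv \<phi> mn = (\<Prod>v\<in>Poly_Mapping.keys mn. \<phi> v ^ Poly_Mapping.lookup mn v)"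

lemma mono_superset:
  assumes "finite S" "Poly_Mapping.keys mn \<subseteq> S"
  shows "monv \<phi> mn = (\<Prod>v\<in>S. \<phi> v ^ Poly_Mapping.lookup mn v)"
  unfolding monv_def
  by (rule prod.mono_neutral_left[OF assms]) (auto simp: in_keys_iff)

lemma mono_add: "monv \<phi> (a + b) = monv \<phi> a * monv \<phi> b"
proof -
  let ?S = "Poly_Mapping.keys a \<union> Poly_Mapping.keys b"
  have "monv \<phi> (a+b) = (\<Prod>v\<in>?S. \<phi> v ^ Poly_Mapping.lookup (a+b) v)"
    by (rule mono_superset) (auto simp: keys_add)
  also have "\<dots> = (\<Prod>v\<in>?S. \<phi> v ^ Poly_Mapping.lookup a v) * (\<Prod>v\<in>?S. \<phi> v ^ Poly_Mapping.lookup b v)"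
    by (simp add: lookup_add power_add prod.distrib)
  also have "\<dots> = monv \<phi> a * monv \<phi> b"
    by (simp add: mono_superset[of ?S a] mono_superset[of ?S b])
  finally show ?thesis .
qed

lemma mono_zero[simp]: "monv \<phi> 0 = 1" by (simp add: monv_def)
lemma mono_single1: "monv \<phi> (Poly_Mapping.single v 1) = \<phi> v" by (simp add: monv_def)

abbreviation E :: "('v \<Rightarrow> ('w, 'k::comm_ring_1) mpoly) \<Rightarrow> ('v, 'k) mpoly \<Rightarrow> ('w, 'k) mpoly" where
  "E \<phi> \<equiv> peval \<phi> pconst"

lemma peval_alt: "peval \<phi> c p = (\<Sum>mn\<in>Poly_Mapping.keys p. c (Poly_Mapping.lookup p mn) * monv \<phi> mn)"
  by (simp add: peval_def monv_def)

lemma E_superset: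
  assumes "finite S" "Poly_Mapping.keys p \<subseteq> S"
  shows "E \<phi> p = (\<Sum>mn\<in>S. pconst (Poly_Mapping.lookup p mn) * monv \<phi> mn)"
  unfolding peval_alt
  by (rule sum.mono_neutral_left[OF assms]) (auto simp: in_keys_iff)

lemma E_zero[simp]: "E \<phi> 0 = 0" by (simp add: peval_def)

lemma E_add: "E \<phi> (p + q) = E \<phi> p + E \<phi> q"
proof -
  let ?S = "Poly_Mapping.keys p \<union> Poly_Mapping.keys q"
  have "E \<phi> (p+q) = (\<Sum>mn\<in>?S. pconst (Poly_Mapping.lookup (p+q) mn) * monv \<phi> mn)"
    by (rule E_superset) (auto simp: keys_add)
  also have "\<dots> = E \<phi> p + E \<phi> q"
    by (simp add: lookup_add pconst_add distrib_right sum.distrib E_superset[of ?S p] E_superset[of ?S q])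
  finally show ?thesis .
qed

lemma E_sum: "E \<phi> (sum f A) = (\<Sum>a\<in>A. E \<phi> (f a))"
  by (induction A rule: infinite_finite_induct) (auto simp: E_add)

lemma E_single: "E \<phi> (Poly_Mapping.single a c) = pconst c * monv \<phi> a"
  by (cases "c = 0") (simp_all add: peval_alt)

lemma E_uminus: "E \<phi> (- p) = - E \<phi> p"
  by (metis E_add E_zero add_eq_0_iff)

lemma E_diff: "E \<phi> (p - q) = E \<phi> p - E \<phi> q"
  by (metis E_add E_uminus diff_conv_add_uminus)

lemma E_mult: "E \<phi> (p * q) = E \<phi> p * E \<phi> q"
proof -
  have "p * q = (\<Sum>a\<in>Poly_Mapping.keys p. \<Sum>b\<in>Poly_Mapping.keys q.
          Poly_Mapping.single a (Poly_Mapping.lookup p a) * Poly_Mapping.single b (Poly_Mapping.lookup q b))"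
    by (subst poly_mapping_sum_singles[of p], subst poly_mapping_sum_singles[of q])
       (simp add: sum_product)
  hence "E \<phi> (p * q) = (\<Sum>a\<in>Poly_Mapping.keys p. \<Sum>b\<in>Poly_Mapping.keys q.
          (pconst (Poly_Mapping.lookup p a) * monv \<phi> a) * (pconst (Poly_Mapping.lookup q b) * monv \<phi> b))"
    by (simp add: E_sum mult_single E_single pconst_mult mono_add mult_ac)
  also have "\<dots> = E \<phi> p * E \<phi> q"
    by (simp add: peval_alt sum_product)
  finally show ?thesis .
qed

lemma E_pconst[simp]: "E \<phi> (pconst c) = pconst c"
  by (simp add: pconst_def E_single)

lemma E_one[simp]: "E \<phi> 1 = 1"
  by (metis E_pconst pconst_1)

lemma E_pvar[simp]: "E \<phi> (pvar v) = \<phi> v"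
  by (simp add: pvar_def E_single monv_def)

lemma E_prod: "E \<phi> (prod f A) = (\<Prod>a\<in>A. E \<phi> (f a))"
  by (induction A rule: infinite_finite_induct) (auto simp: E_mult)

lemma E_power: "E \<phi> (p ^ n) = E \<phi> p ^ n"
  by (induction n) (auto simp: E_mult)

lemma mono_as_prod: "monv \<phi> mn = (\<Prod>v\<in>Poly_Mapping.keys mn. \<phi> v ^ Poly_Mapping.lookup mn v)"
  by (simp add: monv_def)

lemma E_mono: "E \<psi> (monv \<phi> mn) = monv (\<lambda>v. E \<psi> (\<phi> v)) mn"
  by (simp add: monv_def E_prod E_power)

lemma E_comp: "E \<psi> (E \<phi> p) = E (\<lambda>v. E \<psi> (\<phi> v)) p"
proof -
  have "E \<psi> (E \<phi> p) = E \<psi> (\<Sum>mn\<in>Poly_Mapping.keys p. pconst (Poly_Mapping.lookup p mn) * monv \<phi> mn)"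
    by (subst peval_alt) (rule refl)
  also have "\<dots> = (\<Sum>mn\<in>Poly_Mapping.keys p. pconst (Poly_Mapping.lookup p mn) * monv (\<lambda>v. E \<psi> (\<phi> v)) mn)"
    by (simp only: E_sum E_mult E_mono E_pconst)
  also have "\<dots> = E (\<lambda>v. E \<psi> (\<phi> v)) p"
    by (rule peval_alt[symmetric])
  finally show ?thesis .
qed

lemma E_cong:
  assumes "\<And>mn v. mn \<in> Poly_Mapping.keys p \<Longrightarrow> v \<in> Poly_Mapping.keys mn \<Longrightarrow> \<phi> v = \<psi> v"
  shows "E \<phi> p = E \<psi> p"
  unfolding peval_alt monv_def using assms by (auto intro!: sum.cong prod.cong)

lemma E_all_zero:
  assumes "\<And>mn v. mn \<in> Poly_Mapping.keys p \<Longrightarrow> v \<in> Poly_Mapping.keys mn \<Longrightarrow> \<phi> v = 0"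
  shows "E \<phi> p = pconst (Poly_Mapping.lookup p 0)"
proof -
  have "E \<phi> p = (\<Sum>mn\<in>Poly_Mapping.keys p. pconst (Poly_Mapping.lookup p mn) * monv \<phi> mn)"
    by (simp add: peval_alt)
  also have "\<dots> = (\<Sum>mn\<in>Poly_Mapping.keys p. pconst (Poly_Mapping.lookup p mn) * (if mn = 0 then 1 else 0))"
  proof (rule sum.cong[OF refl])
    fix mn assume mn: "mn \<in> Poly_Mapping.keys p"
    show "pconst (Poly_Mapping.lookup p mn) * monv \<phi> mn = pconst (Poly_Mapping.lookup p mn) * (if mn = 0 then 1 else 0)"
    proof (cases "mn = 0")
      case False
      then obtain v where v: "v \<in> Poly_Mapping.keys mn" by (metis keys_eq_empty ex_in_conv)
      hence "Poly_Mapping.lookup mn v \<noteq> 0" by (simp add: in_keys_iff)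
      hence "monv \<phi> mn = 0" unfolding monv_def using v assms[OF mn v]
        by (intro prod_zero) (auto intro!: bexI[of _ v] simp: zero_power)
      thus ?thesis using False by simp
    qed simp
  qed
  also have "\<dots> = pconst (Poly_Mapping.lookup p 0)"
    by (simp add: if_distrib[of "\<lambda>x. _ * x"] sum.delta' in_keys_iff cong: if_cong)
  finally show ?thesis .
qed


section \<open>Species lemmas\<close>

context
  fixes M :: "nat set \<Rightarrow> 'm set" and rl :: "(nat \<Rightarrow> nat) \<Rightarrow> nat set \<Rightarrow> 'm \<Rightarrow> 'm"
  assumes sp: "species M rl"
begin

lemma sp_finite: "finite U \<Longrightarrow> finite (M U)"
  using sp unfolding species_def by (elim conjE; metis)
lemma sp_id: "finite U \<Longrightarrow> m \<in> M U \<Longrightarrow> rl (\<lambda>x. x) U m = m"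
  using sp unfolding species_def by (elim conjE; metis)
lemma sp_in: "finite U \<Longrightarrow> bij_betw \<sigma> U V \<Longrightarrow> m \<in> M U \<Longrightarrow> rl \<sigma> U m \<in> M V"
  using sp unfolding species_def by (elim conjE; metis)
lemma sp_comp: "finite U \<Longrightarrow> bij_betw \<sigma> U V \<Longrightarrow> bij_betw \<tau> V W \<Longrightarrow> m \<in> M U \<Longrightarrow>
          rl (\<tau> \<circ> \<sigma>) U m = rl \<tau> V (rl \<sigma> U m)"
  using sp unfolding species_def by (elim conjE; metis)
lemma sp_cong: "(\<And>x. x \<in> U \<Longrightarrow> \<sigma> x = \<sigma>' x) \<Longrightarrow> rl \<sigma> U m = rl \<sigma>' U m"
  using sp unfolding species_def by (elim conjE; metis)

lemma sp_inv:
  assumes "finite U" "bij_betw \<sigma> U V" "m \<in> M U"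
  shows "rl (inv_into U \<sigma>) V (rl \<sigma> U m) = m"
proof -
  have b: "bij_betw (inv_into U \<sigma>) V U" using assms(2) by (rule bij_betw_inv_into)
  have "rl (inv_into U \<sigma>) V (rl \<sigma> U m) = rl (inv_into U \<sigma> \<circ> \<sigma>) U m"
    using sp_comp[OF assms(1,2) b assms(3)] by simp
  also have "\<dots> = rl (\<lambda>x. x) U m"
    using assms(2) by (intro sp_cong) (simp add: bij_betw_def inv_into_f_f)
  finally show ?thesis using sp_id assms by simp
qed

lemma sp_bij:
  assumes "finite U" "bij_betw \<sigma> U V"
  shows "bij_betw (rl \<sigma> U) (M U) (M V)"
proof -
  have fV: "finite V" using assms bij_betw_finite by blast
  have b: "bij_betw (inv_into U \<sigma>) V U" using assms(2) by (rule bij_betw_inv_into)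
  have inv2: "bij_betw (inv_into V (inv_into U \<sigma>)) U V" using b by (rule bij_betw_inv_into)
  have e: "inv_into V (inv_into U \<sigma>) x = \<sigma> x" if x: "x \<in> U" for x
  proof -
    have 1: "inv_into U \<sigma> (\<sigma> x) = x" using assms(2) x by (simp add: bij_betw_def inv_into_f_f)
    have 2: "inj_on (inv_into U \<sigma>) V" using b by (simp add: bij_betw_def)
    have 3: "\<sigma> x \<in> V" using assms(2) x by (meson bij_betwE)
    show ?thesis using inv_into_f_f[OF 2 3] 1 by simp
  qed
  show ?thesis
  proof (rule bij_betw_byWitness[where f' = "rl (inv_into U \<sigma>) V"])
    show "\<forall>a\<in>M U. rl (inv_into U \<sigma>) V (rl \<sigma> U a) = a" using sp_inv assms by blast
    show "\<forall>a'\<in>M V. rl \<sigma> U (rl (inv_into U \<sigma>) V a') = a'"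
    proof
      fix a' assume a': "a' \<in> M V"
      have "rl \<sigma> U (rl (inv_into U \<sigma>) V a') = rl (inv_into V (inv_into U \<sigma>)) U (rl (inv_into U \<sigma>) V a')"
        using e by (intro sp_cong) auto
      also have "\<dots> = a'" using sp_inv[OF fV b a'] .
      finally show "rl \<sigma> U (rl (inv_into U \<sigma>) V a') = a'" .
    qed
    show "rl \<sigma> U ` M U \<subseteq> M V" using sp_in assms by blast
    show "rl (inv_into U \<sigma>) V ` M V \<subseteq> M U" using sp_in fV b by blast
  qed
qed

lemma tp_self: "finite U \<Longrightarrow> m \<in> M U \<Longrightarrow> (U, m) \<in> tp rl U m"
  unfolding tp_def using sp_id by (auto intro!: exI[of _ "\<lambda>x. x"] bij_betw_id[unfolded id_def])

lemma tp_transport: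
  assumes "finite U" "bij_betw \<sigma> U V" "m \<in> M U"
  shows "tp rl V (rl \<sigma> U m) = tp rl U m"
proof -
  have fV: "finite V" using assms bij_betw_finite by blast
  have b: "bij_betw (inv_into U \<sigma>) V U" using assms(2) by (rule bij_betw_inv_into)
  show ?thesis
  proof (rule set_eqI, rule iffI)
    fix x assume "x \<in> tp rl V (rl \<sigma> U m)"
    then obtain \<tau> W where x: "x = (W, rl \<tau> V (rl \<sigma> U m))" "bij_betw \<tau> V W" unfolding tp_def by blast
    have "rl \<tau> V (rl \<sigma> U m) = rl (\<tau> \<circ> \<sigma>) U m" using sp_comp[OF assms(1,2) x(2) assms(3)] by simp
    moreover have "bij_betw (\<tau> \<circ> \<sigma>) U W" using assms(2) x(2) by (rule bij_betw_trans)
    ultimately show "x \<in> tp rl U m" unfolding tp_def using x(1) by blast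
  next
    fix x assume "x \<in> tp rl U m"
    then obtain \<rho> W where x: "x = (W, rl \<rho> U m)" "bij_betw \<rho> U W" unfolding tp_def by blast
    have b2: "bij_betw (\<rho> \<circ> inv_into U \<sigma>) V W" using b x(2) by (rule bij_betw_trans)
    have "rl (\<rho> \<circ> inv_into U \<sigma>) V (rl \<sigma> U m) = rl ((\<rho> \<circ> inv_into U \<sigma>) \<circ> \<sigma>) U m"
      using sp_comp[OF assms(1,2) b2 assms(3)] by simp
    also have "\<dots> = rl \<rho> U m"
      using assms(2) by (intro sp_cong) (simp add: bij_betw_def inv_into_f_f)
    finally show "x \<in> tp rl V (rl \<sigma> U m)" unfolding tp_def using x b2 by force
  qed
qed

lemma tp_mem:
  assumes "finite U" "m \<in> M U" "(V, m2) \<in> tp rl U m"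
  shows "finite V" "m2 \<in> M V" "tp rl V m2 = tp rl U m" "card V = card U"
proof -
  obtain \<sigma> where s: "m2 = rl \<sigma> U m" "bij_betw \<sigma> U V" using assms(3) unfolding tp_def by blast
  show "finite V" using s assms bij_betw_finite by blast
  show "m2 \<in> M V" using s sp_in assms by blast
  show "tp rl V m2 = tp rl U m" using s tp_transport assms by blast
  show "card V = card U" using s bij_betw_same_card by metis
qed

lemma tp_eq_card:
  assumes "finite U" "m \<in> M U" "finite V" "m2 \<in> M V" "tp rl U m = tp rl V m2"
  shows "card U = card V"
  using tp_mem(4)[OF assms(1,2), of V m2] tp_self[OF assms(3,4)] assms(5) by simp

lemma sum_M_transport:
  assumes "finite U" "bij_betw \<sigma> U V"
  shows "(\<Sum>m\<in>M U. g (tp rl U m)) = (\<Sum>m\<in>M V. g (tp rl V m))"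
  using sum.reindex_bij_betw[OF sp_bij[OF assms], of "\<lambda>m. g (tp rl V m)"]
    tp_transport[OF assms] by (simp cong: sum.cong)

lemma sum_M_card:
  assumes "finite U" "finite V" "card U = card V"
  shows "(\<Sum>m\<in>M U. g (tp rl U m)) = (\<Sum>m\<in>M V. g (tp rl V m))"
proof -
  obtain \<sigma> where "bij_betw \<sigma> U V" using assms by (metis bij_betw_iff_card)
  thus ?thesis using sum_M_transport assms by blast
qed

end


section \<open>Partition lemmas\<close>

lemma blk_eq: "partition_on U \<pi> \<Longrightarrow> B \<in> \<pi> \<Longrightarrow> x \<in> B \<Longrightarrow> blk \<pi> x = B"
  unfolding blk_def
  by (rule the_equality) (auto simp: partition_on_def disjoint_def)

lemma part_sub: "partition_on U \<pi> \<Longrightarrow> B \<in> \<pi> \<Longrightarrow> B \<subseteq> U"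
  by (auto simp: partition_on_def)
lemma part_ne: "partition_on U \<pi> \<Longrightarrow> B \<in> \<pi> \<Longrightarrow> B \<noteq> {}"
  by (auto simp: partition_on_def)
lemma part_fin: "finite U \<Longrightarrow> partition_on U \<pi> \<Longrightarrow> B \<in> \<pi> \<Longrightarrow> finite B"
  by (meson part_sub finite_subset)
lemma part_finite: "finite U \<Longrightarrow> partition_on U \<pi> \<Longrightarrow> finite \<pi>"
  by (rule finite_elements)
lemma part_Min_in: "finite U \<Longrightarrow> partition_on U \<pi> \<Longrightarrow> B \<in> \<pi> \<Longrightarrow> Min B \<in> B"
  using part_fin[of U \<pi> B] part_ne[of U \<pi> B] Min_in[of B] by simp
lemma blk_Min: "finite U \<Longrightarrow> partition_on U \<pi> \<Longrightarrow> B \<in> \<pi> \<Longrightarrow> blk \<pi> (Min B) = B"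
  by (meson blk_eq part_Min_in)
lemma part_disj: "partition_on U \<pi> \<Longrightarrow> B1 \<in> \<pi> \<Longrightarrow> B2 \<in> \<pi> \<Longrightarrow> x \<in> B1 \<Longrightarrow> x \<in> B2 \<Longrightarrow> B1 = B2"
  by (auto simp: partition_on_def disjoint_def)
lemma part_Min_inj: "finite U \<Longrightarrow> partition_on U \<pi> \<Longrightarrow> inj_on Min \<pi>"
  by (rule inj_onI) (metis part_Min_in part_disj)
lemma part_Min_sub: assumes "finite U" "partition_on U \<pi>" shows "Min ` \<pi> \<subseteq> U"
proof
  fix x assume "x \<in> Min ` \<pi>"
  then obtain B where "B \<in> \<pi>" "x = Min B" by blast
  thus "x \<in> U" using part_Min_in[OF assms \<open>B \<in> \<pi>\<close>] part_sub[OF assms(2) \<open>B \<in> \<pi>\<close>] by blast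
qed

lemma part_image:
  assumes "bij_betw \<sigma> U V" "partition_on U \<pi>"
  shows "partition_on V ((`) \<sigma> ` \<pi>)"
proof -
  have "partition_on (\<sigma> ` U) ((`) \<sigma> ` \<pi> - {{}})"
    using assms(1) by (intro partition_on_inj_image[OF assms(2)]) (simp add: bij_betw_def)
  moreover have "(`) \<sigma> ` \<pi> - {{}} = (`) \<sigma> ` \<pi>" using part_ne[OF assms(2)] by blast
  moreover have "\<sigma> ` U = V" using assms(1) by (simp add: bij_betw_def)
  ultimately show ?thesis by simp
qed

lemma img_inj: "inj_on \<sigma> U \<Longrightarrow> partition_on U \<pi> \<Longrightarrow> inj_on ((`) \<sigma>) \<pi>"
  by (rule inj_onI) (meson part_sub inj_on_image_eq_iff)

lemma inv_img: "bij_betw \<sigma> U V \<Longrightarrow> B \<subseteq> U \<Longrightarrow> inv_into U \<sigma> ` \<sigma> ` B = B"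
  by (auto simp: bij_betw_def image_image inv_into_f_f subset_iff)

lemma compM_finite:
  assumes "finite U" "\<And>V. finite V \<Longrightarrow> finite (M V)"
  shows "finite (compM M U)"
proof -
  have "assemblies M U \<subseteq> (\<Union>\<pi>\<in>{\<pi>. partition_on U \<pi>}. Pair \<pi> ` PiE \<pi> M)"
  proof
    fix x assume "x \<in> assemblies M U"
    then obtain \<pi> f where x: "x = (\<pi>, f)" "partition_on U \<pi>" "f \<in> extensional \<pi>" "\<forall>B\<in>\<pi>. f B \<in> M B"
      unfolding assemblies_def by blast
    hence "f \<in> PiE \<pi> M" by (simp add: PiE_def Pi_def)
    thus "x \<in> (\<Union>\<pi>\<in>{\<pi>. partition_on U \<pi>}. Pair \<pi> ` PiE \<pi> M)" using x by blast
  qed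
  moreover have "finite (\<Union>\<pi>\<in>{\<pi>. partition_on U \<pi>}. Pair \<pi> ` PiE \<pi> M)"
  proof (rule finite_UN_I)
    show "finite {\<pi>. partition_on U \<pi>}" using finitely_many_partition_on[OF assms(1)] .
    fix \<pi> assume "\<pi> \<in> {\<pi>. partition_on U \<pi>}"
    hence p: "partition_on U \<pi>" by simp
    have "finite (PiE \<pi> M)"
    proof (rule finite_PiE)
      show "finite \<pi>" using part_finite[OF assms(1) p] .
      fix B assume "B \<in> \<pi>"
      thus "finite (M B)" using assms(2) part_fin[OF assms(1) p] by blast
    qed
    thus "finite (Pair \<pi> ` PiE \<pi> M)" by simp
  qed
  ultimately have fa: "finite (assemblies M U)" by (rule finite_subset)
  have "compM M U \<subseteq> Sigma (assemblies M U) (\<lambda>a. M (Min ` fst a))"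
    unfolding compM_def by auto
  moreover have "finite (Sigma (assemblies M U) (\<lambda>a. M (Min ` fst a)))"
  proof (rule finite_SigmaI[OF fa])
    fix a assume "a \<in> assemblies M U"
    hence "partition_on U (fst a)" unfolding assemblies_def by (cases a) simp
    hence "finite (fst a)" using part_finite[OF assms(1)] by blast
    thus "finite (M (Min ` fst a))" using assms(2) by blast
  qed
  ultimately show ?thesis by (rule finite_subset)
qed

lemma compM_iff: "(((\<pi>, f), m') \<in> compM M U) \<longleftrightarrow>
   partition_on U \<pi> \<and> f \<in> extensional \<pi> \<and> (\<forall>B\<in>\<pi>. f B \<in> M B) \<and> m' \<in> M (Min ` \<pi>)"
  by (simp add: compM_def assemblies_def)

section \<open>Operad axioms\<close>

context
  fixes M :: "nat set \<Rightarrow> 'm set" and rl :: "(nat \<Rightarrow> nat) \<Rightarrow> nat set \<Rightarrow> 'm \<Rightarrow> 'm"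
    and \<eta> :: "nat set set \<times> (nat set \<Rightarrow> 'm) \<Rightarrow> 'm \<Rightarrow> 'm"
  assumes op: "set_operad M rl \<eta>"
begin

lemma op_sp: "species M rl" using op unfolding set_operad_def by (elim conjE) assumption
lemma op_empty: "M {} = {}" using op unfolding set_operad_def by (elim conjE) assumption
lemma op_single_all: "\<forall>u. \<exists>e. M {u} = {e}" using op unfolding set_operad_def by (elim conjE) assumption
lemma op_single: "\<exists>e. M {u} = {e}" using op_single_all by blast
lemma op_eta_all: "\<forall>U a m'. finite U \<longrightarrow> (a, m') \<in> compM M U \<longrightarrow> \<eta> a m' \<in> M U"
  using op unfolding set_operad_def by (elim conjE) assumption
lemmas op_eta = op_eta_all[rule_format]
lemma op_nat_all: "\<forall>\<sigma> U V \<pi> f m'. finite U \<longrightarrow> bij_betw \<sigma> U V \<longrightarrow> ((\<pi>, f), m') \<in> compM M U \<longrightarrow>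
        rl \<sigma> U (\<eta> (\<pi>, f) m') =
        \<eta> ((`) \<sigma> ` \<pi>,
            restrict (\<lambda>B'. rl \<sigma> (inv_into U \<sigma> ` B') (f (inv_into U \<sigma> ` B'))) ((`) \<sigma> ` \<pi>))
          (rl (\<lambda>x. Min (\<sigma> ` blk \<pi> x)) (Min ` \<pi>) m')"
  using op unfolding set_operad_def by (elim conjE) assumption
lemmas op_nat = op_nat_all[rule_format]
lemma op_lunit_all: "\<forall>U m. finite U \<longrightarrow> U \<noteq> {} \<longrightarrow> m \<in> M U \<longrightarrow>
        \<eta> ((\<lambda>u. {u}) ` U, restrict (\<lambda>B. the_elem (M B)) ((\<lambda>u. {u}) ` U)) m = m"
  using op unfolding set_operad_def by (elim conjE) assumption
lemmas op_lunit = op_lunit_all[rule_format]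
lemma op_runit_all: "\<forall>U m. finite U \<longrightarrow> U \<noteq> {} \<longrightarrow> m \<in> M U \<longrightarrow>
        \<eta> ({U}, restrict (\<lambda>_. m) {U}) (the_elem (M {Min U})) = m"
  using op unfolding set_operad_def by (elim conjE) assumption
lemmas op_runit = op_runit_all[rule_format]

lemma op_single_elem: "M {u} = {the_elem (M {u})}"
proof -
  obtain e where "M {u} = {e}" using op_single[of u] by blast
  thus ?thesis by simp
qed

lemma op_fin: "finite U \<Longrightarrow> finite (M U)" using sp_finite[OF op_sp] .
lemma compM_fin: "finite U \<Longrightarrow> finite (compM M U)"
  using compM_finite op_fin by blast

lemma op_M_ne: "m \<in> M U \<Longrightarrow> U \<noteq> {}" using op_empty by auto

lemma tp_single: "tp rl {u} e = dot M rl" if "e \<in> M {u}"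
proof -
  have sp: "species M rl" by (rule op_sp)
  have b: "bij_betw (\<lambda>x. 1::nat) {u} {1}" by (simp add: bij_betw_def)
  have "rl (\<lambda>x. 1) {u} e \<in> M {1}" using sp_in[OF sp _ b that] by simp
  hence "rl (\<lambda>x. 1) {u} e = the_elem (M {1})" using op_single_elem[of 1] by auto
  hence "tp rl {1} (the_elem (M {1})) = tp rl {u} e"
    using tp_transport[OF sp _ b that] by simp
  thus ?thesis by (simp add: dot_def)
qed

lemma dot_in: "dot M rl = tp rl {1} (the_elem (M {1}))" by (simp add: dot_def)

lemma tp_ne_dot:
  assumes "finite U" "m \<in> M U" "card U \<noteq> 1"
  shows "tp rl U m \<noteq> dot M rl"
proof
  assume "tp rl U m = dot M rl"
  hence "tp rl U m = tp rl {1} (the_elem (M {1}))" by (simp add: dot_def)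
  moreover have "the_elem (M {1}) \<in> M {1}" using op_single_elem[of 1] by blast
  ultimately have "card U = card {1::nat}" using tp_eq_card[OF op_sp assms(1,2)] by blast
  thus False using assms by simp
qed

end


definition Tr :: "((nat \<Rightarrow> nat) \<Rightarrow> nat set \<Rightarrow> 'm \<Rightarrow> 'm) \<Rightarrow> (nat \<Rightarrow> nat) \<Rightarrow> nat set
   \<Rightarrow> (nat set set \<times> (nat set \<Rightarrow> 'm)) \<times> 'm \<Rightarrow> (nat set set \<times> (nat set \<Rightarrow> 'm)) \<times> 'm" where
  "Tr rl \<sigma> U x = (case x of ((\<pi>, f), m') \<Rightarrow>
     (((`) \<sigma> ` \<pi>, restrict (\<lambda>B'. rl \<sigma> (inv_into U \<sigma> ` B') (f (inv_into U \<sigma> ` B'))) ((`) \<sigma> ` \<pi>)),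
      rl (\<lambda>x. Min (\<sigma> ` blk \<pi> x)) (Min ` \<pi>) m'))"

context
  fixes M :: "nat set \<Rightarrow> 'm set" and rl :: "(nat \<Rightarrow> nat) \<Rightarrow> nat set \<Rightarrow> 'm \<Rightarrow> 'm"
    and \<eta> :: "nat set set \<times> (nat set \<Rightarrow> 'm) \<Rightarrow> 'm \<Rightarrow> 'm"
  assumes op: "set_operad M rl \<eta>"
begin

lemma sp: "species M rl" by (rule op_sp[OF op])

lemma Min_map_bij:
  assumes fU: "finite U" and b: "bij_betw \<sigma> U V" and p: "partition_on U \<pi>"
  shows "bij_betw (\<lambda>x. Min (\<sigma> ` blk \<pi> x)) (Min ` \<pi>) (Min ` ((`) \<sigma> ` \<pi>))"
proof -
  have fV: "finite V" using b fU bij_betw_finite by blast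
  have p2: "partition_on V ((`) \<sigma> ` \<pi>)" by (rule part_image[OF b p])
  have inj: "inj_on \<sigma> U" using b by (simp add: bij_betw_def)
  have e: "(\<lambda>x. Min (\<sigma> ` blk \<pi> x)) (Min B) = Min (\<sigma> ` B)" if "B \<in> \<pi>" for B
    using blk_Min[OF fU p that] by simp
  show ?thesis unfolding bij_betw_def
  proof
    show "inj_on (\<lambda>x. Min (\<sigma> ` blk \<pi> x)) (Min ` \<pi>)"
    proof (rule inj_onI)
      fix x y assume x: "x \<in> Min ` \<pi>" and y: "y \<in> Min ` \<pi>" and eq: "Min (\<sigma> ` blk \<pi> x) = Min (\<sigma> ` blk \<pi> y)"
      obtain B1 where B1: "B1 \<in> \<pi>" "x = Min B1" using x by blast
      obtain B2 where B2: "B2 \<in> \<pi>" "y = Min B2" using y by blast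
      have eq2: "Min (\<sigma> ` B1) = Min (\<sigma> ` B2)" using eq e B1 B2 by simp
      have i1: "\<sigma> ` B1 \<in> (`) \<sigma> ` \<pi>" "\<sigma> ` B2 \<in> (`) \<sigma> ` \<pi>" using B1 B2 by auto
      have "Min (\<sigma> ` B1) \<in> \<sigma> ` B1" by (rule part_Min_in[OF fV p2 i1(1)])
      moreover have "Min (\<sigma> ` B2) \<in> \<sigma> ` B2" by (rule part_Min_in[OF fV p2 i1(2)])
      ultimately have "\<sigma> ` B1 = \<sigma> ` B2" using part_disj[OF p2 i1(1) i1(2)] eq2 by metis
      hence "B1 = B2" using img_inj[OF inj p] B1 B2 by (meson inj_onD)
      thus "x = y" using B1 B2 by simp
    qed
    show "(\<lambda>x. Min (\<sigma> ` blk \<pi> x)) ` Min ` \<pi> = Min ` (`) \<sigma> ` \<pi>"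
      using e by (force simp: image_image intro: image_cong)
  qed
qed

lemma Tr_eq:
  "Tr rl \<sigma> U ((\<pi>, f), m') =
     (((`) \<sigma> ` \<pi>, restrict (\<lambda>B'. rl \<sigma> (inv_into U \<sigma> ` B') (f (inv_into U \<sigma> ` B'))) ((`) \<sigma> ` \<pi>)),
      rl (\<lambda>x. Min (\<sigma> ` blk \<pi> x)) (Min ` \<pi>) m')"
  by (simp add: Tr_def)

lemma Tr_f:
  assumes b: "bij_betw \<sigma> U V" and p: "partition_on U \<pi>" and B: "B \<in> \<pi>"
  shows "restrict (\<lambda>B'. rl \<sigma> (inv_into U \<sigma> ` B') (f (inv_into U \<sigma> ` B'))) ((`) \<sigma> ` \<pi>) (\<sigma> ` B) = rl \<sigma> B (f B)"
  using inv_img[OF b part_sub[OF p B]] B by simp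

lemma Tr_compM:
  assumes fU: "finite U" and b: "bij_betw \<sigma> U V" and x: "((\<pi>, f), m') \<in> compM M U"
  shows "Tr rl \<sigma> U ((\<pi>, f), m') \<in> compM M V"
proof -
  have p: "partition_on U \<pi>" and fe: "f \<in> extensional \<pi>" and fM: "\<forall>B\<in>\<pi>. f B \<in> M B"
    and m': "m' \<in> M (Min ` \<pi>)" using x by (auto simp: compM_iff)
  have p2: "partition_on V ((`) \<sigma> ` \<pi>)" by (rule part_image[OF b p])
  have blocks: "\<forall>B'\<in>(`) \<sigma> ` \<pi>. restrict (\<lambda>B'. rl \<sigma> (inv_into U \<sigma> ` B') (f (inv_into U \<sigma> ` B'))) ((`) \<sigma> ` \<pi>) B' \<in> M B'"
  proof
    fix B' assume "B' \<in> (`) \<sigma> ` \<pi>"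
    then obtain B where B: "B \<in> \<pi>" "B' = \<sigma> ` B" by blast
    have bB: "bij_betw \<sigma> B (\<sigma> ` B)" using b part_sub[OF p B(1)] bij_betw_subset by blast
    have "rl \<sigma> B (f B) \<in> M (\<sigma> ` B)" using sp_in[OF sp part_fin[OF fU p B(1)] bB] fM B by blast
    thus "restrict (\<lambda>B'. rl \<sigma> (inv_into U \<sigma> ` B') (f (inv_into U \<sigma> ` B'))) ((`) \<sigma> ` \<pi>) B' \<in> M B'"
      using Tr_f[OF b p B(1)] B by simp
  qed
  have fmin: "finite (Min ` \<pi>)" using part_finite[OF fU p] by simp
  have outer: "rl (\<lambda>x. Min (\<sigma> ` blk \<pi> x)) (Min ` \<pi>) m' \<in> M (Min ` ((`) \<sigma> ` \<pi>))"
    by (rule sp_in[OF sp fmin Min_map_bij[OF fU b p] m'])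
  show ?thesis unfolding Tr_eq compM_iff using p2 blocks outer by auto
qed

lemma Tr_eta:
  assumes fU: "finite U" and b: "bij_betw \<sigma> U V" and x: "((\<pi>, f), m') \<in> compM M U"
  shows "case_prod \<eta> (Tr rl \<sigma> U ((\<pi>, f), m')) = rl \<sigma> U (\<eta> (\<pi>, f) m')"
  unfolding Tr_eq using op_nat[OF op fU b x] by simp

lemma Tr_blocks:
  assumes fU: "finite U" and b: "bij_betw \<sigma> U V" and x: "((\<pi>, f), m') \<in> compM M U"
  shows "(\<Prod>B'\<in>(`) \<sigma> ` \<pi>. g (tp rl B' (restrict (\<lambda>B'. rl \<sigma> (inv_into U \<sigma> ` B') (f (inv_into U \<sigma> ` B'))) ((`) \<sigma> ` \<pi>) B')))
       = (\<Prod>B\<in>\<pi>. g (tp rl B (f B)))"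
proof -
  have p: "partition_on U \<pi>" and fM: "\<forall>B\<in>\<pi>. f B \<in> M B" using x by (auto simp: compM_iff)
  have inj: "inj_on ((`) \<sigma>) \<pi>" using b by (intro img_inj[OF _ p]) (simp add: bij_betw_def)
  have "(\<Prod>B'\<in>(`) \<sigma> ` \<pi>. g (tp rl B' (restrict (\<lambda>B'. rl \<sigma> (inv_into U \<sigma> ` B') (f (inv_into U \<sigma> ` B'))) ((`) \<sigma> ` \<pi>) B')))
      = (\<Prod>B\<in>\<pi>. g (tp rl (\<sigma> ` B) (restrict (\<lambda>B'. rl \<sigma> (inv_into U \<sigma> ` B') (f (inv_into U \<sigma> ` B'))) ((`) \<sigma> ` \<pi>) (\<sigma> ` B))))"
    by (rule prod.reindex[OF inj, unfolded comp_def])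
  also have "\<dots> = (\<Prod>B\<in>\<pi>. g (tp rl B (f B)))"
  proof (rule prod.cong[OF refl])
    fix B assume B: "B \<in> \<pi>"
    have bB: "bij_betw \<sigma> B (\<sigma> ` B)" using b part_sub[OF p B] bij_betw_subset by blast
    show "g (tp rl (\<sigma> ` B) (restrict (\<lambda>B'. rl \<sigma> (inv_into U \<sigma> ` B') (f (inv_into U \<sigma> ` B'))) ((`) \<sigma> ` \<pi>) (\<sigma> ` B))) = g (tp rl B (f B))"
      using Tr_f[OF b p B] tp_transport[OF sp part_fin[OF fU p B] bB] fM B by simp
  qed
  finally show ?thesis .
qed

lemma Tr_outer:
  assumes fU: "finite U" and b: "bij_betw \<sigma> U V" and x: "((\<pi>, f), m') \<in> compM M U"
  shows "tp rl (Min ` ((`) \<sigma> ` \<pi>)) (rl (\<lambda>x. Min (\<sigma> ` blk \<pi> x)) (Min ` \<pi>) m') = tp rl (Min ` \<pi>) m'"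
proof -
  have p: "partition_on U \<pi>" and m': "m' \<in> M (Min ` \<pi>)" using x by (auto simp: compM_iff)
  have fmin: "finite (Min ` \<pi>)" using part_finite[OF fU p] by simp
  show ?thesis by (rule tp_transport[OF sp fmin Min_map_bij[OF fU b p] m'])
qed

lemma Tr_inj:
  assumes fU: "finite U" and b: "bij_betw \<sigma> U V"
  shows "inj_on (Tr rl \<sigma> U) (compM M U)"
proof (rule inj_onI)
  fix x y assume x: "x \<in> compM M U" and y: "y \<in> compM M U" and eq: "Tr rl \<sigma> U x = Tr rl \<sigma> U y"
  obtain \<pi>1 f1 m1 where x': "x = ((\<pi>1, f1), m1)" by (metis prod.exhaust)
  obtain \<pi>2 f2 m2 where y': "y = ((\<pi>2, f2), m2)" by (metis prod.exhaust)
  have p1: "partition_on U \<pi>1" and fe1: "f1 \<in> extensional \<pi>1" and fM1: "\<forall>B\<in>\<pi>1. f1 B \<in> M B"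
    and m1: "m1 \<in> M (Min ` \<pi>1)" using x x' by (auto simp: compM_iff)
  have p2: "partition_on U \<pi>2" and fe2: "f2 \<in> extensional \<pi>2" and fM2: "\<forall>B\<in>\<pi>2. f2 B \<in> M B"
    and m2: "m2 \<in> M (Min ` \<pi>2)" using y y' by (auto simp: compM_iff)
  have inj: "inj_on \<sigma> U" using b by (simp add: bij_betw_def)
  have e1: "(`) \<sigma> ` \<pi>1 = (`) \<sigma> ` \<pi>2" using eq x' y' by (simp add: Tr_eq)
  have pp: "\<pi>1 = \<pi>2"
  proof -
    have "\<pi>1 \<subseteq> Pow U" "\<pi>2 \<subseteq> Pow U" using part_sub p1 p2 by blast+
    moreover have "inj_on ((`) \<sigma>) (Pow U)" using inj by (auto intro!: inj_onI simp: inj_on_image_eq_iff)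
    ultimately show ?thesis using e1 inj_on_image_eq_iff by metis
  qed
  have ff: "f1 = f2"
  proof (rule extensionalityI[OF fe1 fe2[folded pp]])
    fix B assume B: "B \<in> \<pi>1"
    have r: "restrict (\<lambda>B'. rl \<sigma> (inv_into U \<sigma> ` B') (f1 (inv_into U \<sigma> ` B'))) ((`) \<sigma> ` \<pi>1) (\<sigma> ` B)
           = restrict (\<lambda>B'. rl \<sigma> (inv_into U \<sigma> ` B') (f2 (inv_into U \<sigma> ` B'))) ((`) \<sigma> ` \<pi>1) (\<sigma> ` B)"
      using eq x' y' pp by (simp add: Tr_eq)
    have "rl \<sigma> B (f1 B) = rl \<sigma> B (f2 B)"
      using r Tr_f[OF b p1 B, of f1] Tr_f[OF b p1 B, of f2] by simp
    moreover have bB: "bij_betw \<sigma> B (\<sigma> ` B)" using b part_sub[OF p1 B] bij_betw_subset by blast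
    ultimately show "f1 B = f2 B"
      using sp_inv[OF sp part_fin[OF fU p1 B] bB] fM1 fM2 B pp by metis
  qed
  have mm: "m1 = m2"
  proof -
    have "rl (\<lambda>x. Min (\<sigma> ` blk \<pi>1 x)) (Min ` \<pi>1) m1 = rl (\<lambda>x. Min (\<sigma> ` blk \<pi>1 x)) (Min ` \<pi>1) m2"
      using eq x' y' pp by (simp add: Tr_eq)
    moreover have fmin: "finite (Min ` \<pi>1)" using part_finite[OF fU p1] by simp
    ultimately show ?thesis
      using sp_inv[OF sp fmin Min_map_bij[OF fU b p1]] m1 m2 pp by metis
  qed
  show "x = y" using x' y' pp ff mm by simp
qed

end


lemma bij_from_injs:
  assumes "finite A" "finite B" "f ` A \<subseteq> B" "inj_on f A" "g ` B \<subseteq> A" "inj_on g B"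
  shows "bij_betw f A B"
proof -
  have "card A \<le> card B" using card_inj_on_le assms by blast
  moreover have "card B \<le> card A" using card_inj_on_le assms by blast
  ultimately have "card (f ` A) = card B" using card_image[OF assms(4)] by simp
  hence "f ` A = B" using card_subset_eq[OF assms(2,3)] by simp
  thus ?thesis using assms(4) by (simp add: bij_betw_def)
qed

definition Sset :: "(nat set \<Rightarrow> 'm set) \<Rightarrow> (nat set set \<times> (nat set \<Rightarrow> 'm) \<Rightarrow> 'm \<Rightarrow> 'm) \<Rightarrow> nat set \<Rightarrow> 'm
   \<Rightarrow> ((nat set set \<times> (nat set \<Rightarrow> 'm)) \<times> 'm) set" where
  "Sset M \<eta> U m = {x \<in> compM M U. case_prod \<eta> x = m}"

definition wtg :: "((nat \<Rightarrow> nat) \<Rightarrow> nat set \<Rightarrow> 'm \<Rightarrow> 'm) \<Rightarrow> ((nat set \<times> 'm) set \<Rightarrow> 'a::comm_semiring_1)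
   \<Rightarrow> ((nat set \<times> 'm) set \<Rightarrow> 'a) \<Rightarrow> (nat set set \<times> (nat set \<Rightarrow> 'm)) \<times> 'm \<Rightarrow> 'a" where
  "wtg rl g h x = (case x of ((\<pi>, f), m') \<Rightarrow> (\<Prod>B\<in>\<pi>. g (tp rl B (f B))) * h (tp rl (Min ` \<pi>) m'))"

lemma wtg_eq: "wtg rl g h ((\<pi>, f), m') = (\<Prod>B\<in>\<pi>. g (tp rl B (f B))) * h (tp rl (Min ` \<pi>) m')"
  by (simp add: wtg_def)

lemma coprod_str_alt:
  "coprod_str M rl \<eta> U m = sum (wtg rl (\<lambda>\<beta>. tvar2 M rl \<beta> True) (\<lambda>\<beta>. tvar2 M rl \<beta> False)) (Sset M \<eta> U m)"
proof -
  have "{((\<pi>, f), m') \<in> compM M U. \<eta> (\<pi>, f) m' = m} = Sset M \<eta> U m"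
    unfolding Sset_def by (auto split: prod.splits)
  thus ?thesis unfolding coprod_str_def by (auto simp: wtg_def intro!: sum.cong split: prod.splits)
qed

context
  fixes M :: "nat set \<Rightarrow> 'm set" and rl :: "(nat \<Rightarrow> nat) \<Rightarrow> nat set \<Rightarrow> 'm \<Rightarrow> 'm"
    and \<eta> :: "nat set set \<times> (nat set \<Rightarrow> 'm) \<Rightarrow> 'm \<Rightarrow> 'm"
  assumes op: "set_operad M rl \<eta>"
begin

lemma Sset_fin: "finite U \<Longrightarrow> finite (Sset M \<eta> U m)"
  unfolding Sset_def using compM_fin[OF op] by simp

lemma Tr_maps:
  assumes fU: "finite U" and b: "bij_betw \<sigma> U V"
  shows "Tr rl \<sigma> U ` Sset M \<eta> U m \<subseteq> Sset M \<eta> V (rl \<sigma> U m)"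
proof
  fix y assume "y \<in> Tr rl \<sigma> U ` Sset M \<eta> U m"
  then obtain x where x: "x \<in> Sset M \<eta> U m" "y = Tr rl \<sigma> U x" by blast
  obtain \<pi> f m' where x': "x = ((\<pi>, f), m')" by (metis prod.exhaust)
  have c: "((\<pi>, f), m') \<in> compM M U" and e: "\<eta> (\<pi>, f) m' = m" using x x' by (auto simp: Sset_def)
  show "y \<in> Sset M \<eta> V (rl \<sigma> U m)"
    unfolding Sset_def using Tr_compM[OF op fU b c] Tr_eta[OF op fU b c] e x x' by simp
qed

lemma Sset_bij:
  assumes fU: "finite U" and b: "bij_betw \<sigma> U V" and m: "m \<in> M U"
  shows "bij_betw (Tr rl \<sigma> U) (Sset M \<eta> U m) (Sset M \<eta> V (rl \<sigma> U m))"
proof -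
  have fV: "finite V" using b fU bij_betw_finite by blast
  have b': "bij_betw (inv_into U \<sigma>) V U" using b by (rule bij_betw_inv_into)
  have hback: "rl (inv_into U \<sigma>) V (rl \<sigma> U m) = m" using sp_inv[OF op_sp[OF op] fU b m] .
  show ?thesis
  proof (rule bij_from_injs[where g = "Tr rl (inv_into U \<sigma>) V"])
    show "finite (Sset M \<eta> U m)" "finite (Sset M \<eta> V (rl \<sigma> U m))" using Sset_fin fU fV by auto
    show "Tr rl \<sigma> U ` Sset M \<eta> U m \<subseteq> Sset M \<eta> V (rl \<sigma> U m)" by (rule Tr_maps[OF fU b])
    show "Tr rl (inv_into U \<sigma>) V ` Sset M \<eta> V (rl \<sigma> U m) \<subseteq> Sset M \<eta> U m"
      using Tr_maps[OF fV b', of "rl \<sigma> U m"] hback by simp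
    show "inj_on (Tr rl \<sigma> U) (Sset M \<eta> U m)"
      using Tr_inj[OF op fU b] by (rule inj_on_subset) (auto simp: Sset_def)
    show "inj_on (Tr rl (inv_into U \<sigma>) V) (Sset M \<eta> V (rl \<sigma> U m))"
      using Tr_inj[OF op fV b'] by (rule inj_on_subset) (auto simp: Sset_def)
  qed
qed

lemma wtg_Tr:
  assumes fU: "finite U" and b: "bij_betw \<sigma> U V" and x: "x \<in> compM M U"
  shows "wtg rl g h (Tr rl \<sigma> U x) = wtg rl g h x"
proof -
  obtain \<pi> f m' where x': "x = ((\<pi>, f), m')" by (metis prod.exhaust)
  have c: "((\<pi>, f), m') \<in> compM M U" using x x' by simp
  show ?thesis unfolding x' Tr_eq[OF op] wtg_eq using Tr_blocks[OF op fU b c, of g] Tr_outer[OF op fU b c]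
    by simp
qed

lemma Sset_sum_transport:
  assumes fU: "finite U" and b: "bij_betw \<sigma> U V" and m: "m \<in> M U"
  shows "sum (wtg rl g h) (Sset M \<eta> V (rl \<sigma> U m)) = sum (wtg rl g h) (Sset M \<eta> U m)"
proof -
  have "sum (wtg rl g h) (Sset M \<eta> V (rl \<sigma> U m)) = sum (\<lambda>x. wtg rl g h (Tr rl \<sigma> U x)) (Sset M \<eta> U m)"
    using sum.reindex_bij_betw[OF Sset_bij[OF fU b m], of "wtg rl g h"] by simp
  also have "\<dots> = sum (wtg rl g h) (Sset M \<eta> U m)"
    by (rule sum.cong[OF refl]) (simp add: wtg_Tr[OF fU b] Sset_def)
  finally show ?thesis .
qed

lemma coprod_str_transport:
  assumes fU: "finite U" and m: "m \<in> M U" and mem: "(V, m2) \<in> tp rl U m"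
  shows "coprod_str M rl \<eta> V m2 = coprod_str M rl \<eta> U m"
proof -
  obtain \<sigma> where s: "m2 = rl \<sigma> U m" "bij_betw \<sigma> U V" using mem unfolding tp_def by blast
  show ?thesis unfolding coprod_str_alt s(1) using Sset_sum_transport[OF fU s(2) m] .
qed

end


abbreviation sing :: "nat set \<Rightarrow> nat set set" where "sing U \<equiv> (\<lambda>u. {u}) ` U"

lemma part_card_lt:
  assumes fU: "finite U" and p: "partition_on U \<pi>" and ns: "\<pi> \<noteq> sing U"
  shows "card \<pi> < card U"
proof -
  have fin: "\<And>B. B \<in> \<pi> \<Longrightarrow> finite B" using part_fin[OF fU p] .
  have cU: "card U = (\<Sum>B\<in>\<pi>. card B)" using product_partition[OF p fin] .
  have ge1: "\<And>B. B \<in> \<pi> \<Longrightarrow> 1 \<le> card B" using fin part_ne[OF p] by (simp add: Suc_leI card_gt_0_iff)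
  have "\<exists>B\<in>\<pi>. card B \<noteq> 1"
  proof (rule ccontr)
    assume "\<not> ?thesis"
    hence c1: "\<And>B. B \<in> \<pi> \<Longrightarrow> card B = 1" by blast
    have "\<pi> = sing U"
    proof
      show "\<pi> \<subseteq> sing U"
      proof
        fix B assume B: "B \<in> \<pi>"
        then obtain b where "B = {b}" using c1 card_1_singletonE by blast
        moreover have "b \<in> U" using part_sub[OF p B] \<open>B = {b}\<close> by blast
        ultimately show "B \<in> sing U" by blast
      qed
      show "sing U \<subseteq> \<pi>"
      proof
        fix S assume "S \<in> sing U"
        then obtain u where u: "u \<in> U" "S = {u}" by blast
        then obtain B where B: "B \<in> \<pi>" "u \<in> B" using partition_onD1[OF p] by blast
        then obtain b where "B = {b}" using c1 card_1_singletonE by blast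
        thus "S \<in> \<pi>" using B u by simp
      qed
    qed
    thus False using ns by simp
  qed
  then obtain B0 where B0: "B0 \<in> \<pi>" "card B0 \<noteq> 1" by blast
  have "(\<Sum>B\<in>\<pi>. (1::nat)) < (\<Sum>B\<in>\<pi>. card B)"
  proof (rule sum_strict_mono_ex1)
    show "finite \<pi>" using part_finite[OF fU p] .
    show "\<forall>x\<in>\<pi>. 1 \<le> card x" using ge1 by blast
    have "1 < card B0" using ge1[OF B0(1)] B0(2) by linarith
    thus "\<exists>a\<in>\<pi>. 1 < card a" using B0(1) by blast
  qed
  thus ?thesis using cU by simp
qed

lemma part_block_lt:
  assumes fU: "finite U" and p: "partition_on U \<pi>" and nU: "\<pi> \<noteq> {U}" and B: "B \<in> \<pi>"
  shows "card B < card U"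
proof (rule ccontr)
  assume "\<not> ?thesis"
  hence "card B = card U" using card_mono[OF fU part_sub[OF p B]] by simp
  hence BU: "B = U" using card_subset_eq[OF fU part_sub[OF p B]] by simp
  have "\<pi> = {U}"
  proof
    show "{U} \<subseteq> \<pi>" using B BU by simp
    show "\<pi> \<subseteq> {U}"
    proof
      fix B' assume B': "B' \<in> \<pi>"
      obtain x where "x \<in> B'" using part_ne[OF p B'] by blast
      moreover hence "x \<in> B" using part_sub[OF p B'] BU by blast
      ultimately have "B' = B" using part_disj[OF p B' B] by blast
      thus "B' \<in> {U}" using BU by simp
    qed
  qed
  thus False using nU by simp
qed

context
  fixes M :: "nat set \<Rightarrow> 'm set" and rl :: "(nat \<Rightarrow> nat) \<Rightarrow> nat set \<Rightarrow> 'm \<Rightarrow> 'm"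
    and \<eta> :: "nat set set \<times> (nat set \<Rightarrow> 'm) \<Rightarrow> 'm \<Rightarrow> 'm"
  assumes op: "set_operad M rl \<eta>"
begin

definition x1 :: "nat set \<Rightarrow> 'm \<Rightarrow> (nat set set \<times> (nat set \<Rightarrow> 'm)) \<times> 'm" where
  "x1 U m = ((sing U, restrict (\<lambda>B. the_elem (M B)) (sing U)), m)"
definition x2 :: "nat set \<Rightarrow> 'm \<Rightarrow> (nat set set \<times> (nat set \<Rightarrow> 'm)) \<times> 'm" where
  "x2 U m = (({U}, restrict (\<lambda>_. m) {U}), the_elem (M {Min U}))"

lemma Min_sing: "Min ` sing U = U" by (simp add: image_image)

lemma x1_in: assumes "finite U" "m \<in> M U" shows "x1 U m \<in> Sset M \<eta> U m"
proof -
  have ne: "U \<noteq> {}" using op_M_ne[OF op assms(2)] .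
  have "\<forall>B\<in>sing U. the_elem (M B) \<in> M B" using op_single_elem[OF op] by (metis imageE singletonI)
  thus ?thesis using assms op_lunit[OF op assms(1) ne assms(2)]
    by (simp add: x1_def Sset_def compM_iff partition_on_singletons Min_sing)
qed

lemma x2_in: assumes "finite U" "m \<in> M U" shows "x2 U m \<in> Sset M \<eta> U m"
proof -
  have ne: "U \<noteq> {}" using op_M_ne[OF op assms(2)] .
  have "the_elem (M {Min U}) \<in> M {Min U}" using op_single_elem[OF op] by (metis singletonI)
  thus ?thesis using assms op_runit[OF op assms(1) ne assms(2)]
    by (simp add: x2_def Sset_def compM_iff partition_on_space[OF ne])
qed

lemma x12_ne: assumes "finite U" "2 \<le> card U" shows "x1 U m \<noteq> x2 U m"
proof
  assume "x1 U m = x2 U m"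
  hence "sing U = {U}" by (simp add: x1_def x2_def)
  hence "card (sing U) = 1" by simp
  moreover have "card (sing U) = card U" by (simp add: card_image)
  ultimately show False using assms by simp
qed

lemma rest_small:
  assumes fU: "finite U" and m: "m \<in> M U" and x: "((\<pi>, f), m') \<in> Sset M \<eta> U m"
    and n1: "((\<pi>, f), m') \<noteq> x1 U m" and n2: "((\<pi>, f), m') \<noteq> x2 U m"
  shows "\<forall>B\<in>\<pi>. card B < card U" "card (Min ` \<pi>) < card U"
proof -
  have p: "partition_on U \<pi>" and fe: "f \<in> extensional \<pi>" and fM: "\<forall>B\<in>\<pi>. f B \<in> M B"
    and m': "m' \<in> M (Min ` \<pi>)" and e: "\<eta> (\<pi>, f) m' = m" using x by (auto simp: Sset_def compM_iff)
  have ne: "U \<noteq> {}" using op_M_ne[OF op m] .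
  have ns: "\<pi> \<noteq> sing U"
  proof
    assume ps: "\<pi> = sing U"
    have ff: "f = restrict (\<lambda>B. the_elem (M B)) (sing U)"
    proof (rule extensionalityI[OF fe[unfolded ps]])
      show "restrict (\<lambda>B. the_elem (M B)) (sing U) \<in> extensional (sing U)" by simp
      fix B assume B: "B \<in> sing U"
      then obtain u where "B = {u}" by blast
      hence "M B = {the_elem (M B)}" using op_single_elem[OF op] by simp
      thus "f B = restrict (\<lambda>B. the_elem (M B)) (sing U) B" using fM ps B by auto
    qed
    have "m' \<in> M U" using m' ps Min_sing by simp
    hence "m' = m" using e op_lunit[OF op fU ne] ps ff by simp
    thus False using n1 ps ff by (simp add: x1_def)
  qed
  have nU: "\<pi> \<noteq> {U}"
  proof
    assume pU: "\<pi> = {U}"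
    have ff: "f = restrict (\<lambda>_. f U) {U}"
      using fe pU by (intro extensionalityI[of _ "{U}"]) auto
    have "m' = the_elem (M {Min U})" using m' pU op_single_elem[OF op, of "Min U"] by auto
    moreover have "f U \<in> M U" using fM pU by simp
    ultimately have "f U = m" using e op_runit[OF op fU ne] pU ff by metis
    thus False using n2 pU ff \<open>m' = the_elem (M {Min U})\<close> by (simp add: x2_def)
  qed
  show "\<forall>B\<in>\<pi>. card B < card U" using part_block_lt[OF fU p nU] by blast
  show "card (Min ` \<pi>) < card U"
    using part_card_lt[OF fU p ns] card_image[OF part_Min_inj[OF fU p]] by simp
qed

lemma wtg_x1:
  assumes "finite U" "m \<in> M U" "g (dot M rl) = 1"
  shows "wtg rl g h (x1 U m) = h (tp rl U m)"
proof -
  have "\<And>B. B \<in> sing U \<Longrightarrow> g (tp rl B (the_elem (M B))) = 1"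
  proof -
    fix B assume "B \<in> sing U"
    then obtain u where u: "B = {u}" by blast
    have "the_elem (M {u}) \<in> M {u}" using op_single_elem[OF op] by (metis singletonI)
    thus "g (tp rl B (the_elem (M B))) = 1" using tp_single[OF op] assms(3) u by simp
  qed
  thus ?thesis by (simp add: x1_def wtg_eq Min_sing)
qed

lemma wtg_x2:
  assumes "finite U" "m \<in> M U"
  shows "wtg rl g h (x2 U m) = g (tp rl U m) * h (dot M rl)"
proof -
  have "the_elem (M {Min U}) \<in> M {Min U}" using op_single_elem[OF op] by (metis singletonI)
  thus ?thesis using tp_single[OF op] by (simp add: x2_def wtg_eq)
qed

definition Rest :: "nat set \<Rightarrow> 'm \<Rightarrow> ((nat set set \<times> (nat set \<Rightarrow> 'm)) \<times> 'm) set" where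
  "Rest U m = Sset M \<eta> U m - {x1 U m, x2 U m}"

lemma Sset_split:
  assumes fU: "finite U" and m: "m \<in> M U" and c2: "2 \<le> card U" and g1: "g (dot M rl) = 1"
  shows "sum (wtg rl g h) (Sset M \<eta> U m) = h (tp rl U m) + g (tp rl U m) * h (dot M rl) + sum (wtg rl g h) (Rest U m)"
proof -
  have f: "finite (Sset M \<eta> U m)" using Sset_fin[OF op fU] .
  have "Sset M \<eta> U m = insert (x1 U m) (insert (x2 U m) (Rest U m))"
    using x1_in[OF fU m] x2_in[OF fU m] unfolding Rest_def by blast
  moreover have "x1 U m \<notin> insert (x2 U m) (Rest U m)" using x12_ne[OF fU c2] by (simp add: Rest_def)
  moreover have "x2 U m \<notin> Rest U m" by (simp add: Rest_def)
  moreover have "finite (Rest U m)" using f by (simp add: Rest_def)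
  ultimately show ?thesis using wtg_x1[OF fU m, of g h, OF g1] wtg_x2[OF fU m, of g h] by (simp add: add.assoc)
qed

lemma Rest_small:
  assumes fU: "finite U" and m: "m \<in> M U" and x: "((\<pi>, f), m') \<in> Rest U m"
  shows "\<forall>B\<in>\<pi>. card B < card U" "card (Min ` \<pi>) < card U"
  using rest_small[OF fU m] x unfolding Rest_def by auto

lemma Rest_fin: "finite U \<Longrightarrow> finite (Rest U m)"
  using Sset_fin[OF op] by (simp add: Rest_def)

end


section \<open>NM closure\<close>

lemma NM_iff: "p \<in> NM M rl \<longleftrightarrow> (\<forall>mn\<in>Poly_Mapping.keys p. \<forall>\<alpha>\<in>Poly_Mapping.keys mn. \<alpha> \<in> types M rl \<and> \<alpha> \<noteq> dot M rl)"
  by (simp add: NM_def)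

lemma NM_keys_sub: "Poly_Mapping.keys p \<subseteq> Poly_Mapping.keys q \<Longrightarrow> q \<in> NM M rl \<Longrightarrow> p \<in> NM M rl"
  unfolding NM_iff by blast

lemma NM_zero[simp]: "0 \<in> NM M rl" by (simp add: NM_iff)
lemma NM_pconst[simp]: "pconst c \<in> NM M rl" by (simp add: NM_iff pconst_def)
lemma NM_one[simp]: "1 \<in> NM M rl" by (simp add: NM_iff)
lemma NM_add: "p \<in> NM M rl \<Longrightarrow> q \<in> NM M rl \<Longrightarrow> p + q \<in> NM M rl"
  unfolding NM_iff using keys_add[of p q] by blast
lemma NM_uminus: "(p::(_, 'k::ab_group_add) mpoly) \<in> NM M rl \<Longrightarrow> - p \<in> NM M rl"
  unfolding NM_iff by simp
lemma NM_mult: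
  assumes "(p::(_, 'k::comm_semiring_1) mpoly) \<in> NM M rl" "q \<in> NM M rl" shows "p * q \<in> NM M rl"
  unfolding NM_iff
proof (intro ballI)
  fix mn \<alpha> assume mn: "mn \<in> Poly_Mapping.keys (p * q)" and a: "\<alpha> \<in> Poly_Mapping.keys mn"
  obtain a b where ab: "mn = a + b" "a \<in> Poly_Mapping.keys p" "b \<in> Poly_Mapping.keys q"
    using keys_mult[of p q] mn by blast
  have "\<alpha> \<in> Poly_Mapping.keys a \<or> \<alpha> \<in> Poly_Mapping.keys b" using keys_add[of a b] a ab(1) by blast
  thus "\<alpha> \<in> types M rl \<and> \<alpha> \<noteq> dot M rl" using assms ab unfolding NM_iff by blast
qed
lemma NM_diff: "(p::(_, 'k::ab_group_add) mpoly) \<in> NM M rl \<Longrightarrow> q \<in> NM M rl \<Longrightarrow> p - q \<in> NM M rl"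
  using NM_add[of p M rl "-q"] NM_uminus[of q] by simp
lemma NM_sum: "(\<And>i. i \<in> A \<Longrightarrow> f i \<in> NM M rl) \<Longrightarrow> sum f A \<in> NM M rl"
  by (induction A rule: infinite_finite_induct) (auto intro: NM_add)
lemma NM_prod: "(\<And>i. i \<in> A \<Longrightarrow> (f i::(_, 'k::comm_semiring_1) mpoly) \<in> NM M rl) \<Longrightarrow> prod f A \<in> NM M rl"
  by (induction A rule: infinite_finite_induct) (auto intro: NM_mult)
lemma NM_power: "(p::(_, 'k::comm_semiring_1) mpoly) \<in> NM M rl \<Longrightarrow> p ^ n \<in> NM M rl"
  by (induction n) (auto intro: NM_mult)
lemma NM_pvar: "\<alpha> \<in> types M rl \<Longrightarrow> \<alpha> \<noteq> dot M rl \<Longrightarrow> (pvar \<alpha> :: (_, 'k::{zero_neq_one}) mpoly) \<in> NM M rl"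
  by (simp add: NM_iff pvar_def)
lemma NM_tvar: "\<alpha> \<in> types M rl \<Longrightarrow> (tvar M rl \<alpha> :: (_, 'k::comm_semiring_1) mpoly) \<in> NM M rl"
  by (simp add: tvar_def NM_pvar)

lemma NM_E:
  assumes "\<And>mn v. mn \<in> Poly_Mapping.keys p \<Longrightarrow> v \<in> Poly_Mapping.keys mn \<Longrightarrow> \<phi> v \<in> NM M rl"
  shows "E \<phi> p \<in> NM M rl"
  unfolding peval_alt monv_def using assms
  by (intro NM_sum NM_mult NM_pconst NM_prod NM_power) auto

context
  fixes N :: "((nat set \<times> 'm) set, 'k::comm_ring_1) mpoly set" and ofk :: "'k \<Rightarrow> 'a::comm_ring_1"
    and \<omega> :: "((nat set \<times> 'm) set, 'k) mpoly \<Rightarrow> 'a"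
  assumes ah: "alg_hom_on N ofk \<omega>"
    and N0: "0 \<in> N" and Nadd: "\<And>p q. p \<in> N \<Longrightarrow> q \<in> N \<Longrightarrow> p + q \<in> N"
    and Nmult: "\<And>p q. p \<in> N \<Longrightarrow> q \<in> N \<Longrightarrow> p * q \<in> N" and N1: "1 \<in> N"
begin

lemma ah_one: "\<omega> 1 = 1" using ah by (simp add: alg_hom_on_def)
lemma ah_add: "p \<in> N \<Longrightarrow> q \<in> N \<Longrightarrow> \<omega> (p + q) = \<omega> p + \<omega> q" using ah by (simp add: alg_hom_on_def)
lemma ah_mult: "p \<in> N \<Longrightarrow> q \<in> N \<Longrightarrow> \<omega> (p * q) = \<omega> p * \<omega> q" using ah by (simp add: alg_hom_on_def)
lemma ah_zero: "\<omega> 0 = 0" using ah_add[OF N0 N0] by simp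
lemma ah_pconst: "\<omega> (pconst c) = ofk c"
  using ah N1 unfolding alg_hom_on_def by (metis mult.right_neutral)
lemma N_sum: "(\<And>i. i \<in> A \<Longrightarrow> f i \<in> N) \<Longrightarrow> sum f A \<in> N"
  by (induction A rule: infinite_finite_induct) (auto intro: N0 Nadd)
lemma N_prod: "(\<And>i. i \<in> A \<Longrightarrow> f i \<in> N) \<Longrightarrow> prod f A \<in> N"
  by (induction A rule: infinite_finite_induct) (auto intro: N1 Nmult)
lemma ah_sum: "(\<And>i. i \<in> A \<Longrightarrow> f i \<in> N) \<Longrightarrow> \<omega> (sum f A) = (\<Sum>i\<in>A. \<omega> (f i))"
proof (induction A rule: infinite_finite_induct)
  case (insert x F)
  have s: "sum f F \<in> N" using insert by (intro N_sum) auto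
  show ?case using insert ah_add[OF _ s] by simp
qed (auto simp: ah_zero)
lemma ah_prod: "(\<And>i. i \<in> A \<Longrightarrow> f i \<in> N) \<Longrightarrow> \<omega> (prod f A) = (\<Prod>i\<in>A. \<omega> (f i))"
proof (induction A rule: infinite_finite_induct)
  case (insert x F)
  have s: "prod f F \<in> N" using insert by (intro N_prod) auto
  show ?case using insert ah_mult[OF _ s] by simp
qed (auto simp: ah_one)

end

lemma NM_alg: "0 \<in> NM M rl" "\<And>p q. p \<in> NM M rl \<Longrightarrow> q \<in> NM M rl \<Longrightarrow> p + q \<in> NM M rl"
  "\<And>p q. (p::(_, 'k::comm_semiring_1) mpoly) \<in> NM M rl \<Longrightarrow> q \<in> NM M rl \<Longrightarrow> p * q \<in> NM M rl" "(1::(_, 'k::comm_semiring_1) mpoly) \<in> NM M rl"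
  by (auto intro: NM_add NM_mult)


definition rep :: "(nat set \<times> 'm) set \<Rightarrow> nat set \<times> 'm" where "rep \<alpha> = (SOME x. x \<in> \<alpha>)"
definition tsz :: "(nat set \<times> 'm) set \<Rightarrow> nat" where "tsz \<alpha> = card (fst (rep \<alpha>))"

lemma wtg_cong:
  assumes "\<And>B. B \<in> fst (fst x) \<Longrightarrow> g1 (tp rl B (snd (fst x) B)) = g2 (tp rl B (snd (fst x) B))"
  shows "wtg rl g1 h x = wtg rl g2 h x"
  using assms by (cases x) (auto simp: wtg_def intro!: prod.cong)

lemma E_tvar2:
  assumes "\<phi> (dot M rl, b) = 1"
  shows "E \<phi> (tvar2 M rl \<beta> b) = \<phi> (\<beta>, b)"
  using assms by (simp add: tvar2_def)

lemma E_wtg: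
  "E \<phi> (wtg rl g h x) = wtg rl (\<lambda>\<beta>. E \<phi> (g \<beta>)) (\<lambda>\<beta>. E \<phi> (h \<beta>)) x"
  by (cases x) (auto simp: wtg_def E_mult E_prod)

lemma E_coprod_str:
  fixes S :: "((nat set \<times> 'm) set, 'k::comm_ring_1) mpoly \<Rightarrow> ((nat set \<times> 'm) set, 'k) mpoly"
  assumes S1: "S 1 = 1"
  shows "E (\<lambda>(\<alpha>, b). if b then S (tvar M rl \<alpha>) else tvar M rl \<alpha>) (coprod_str M rl \<eta> U m)
       = sum (wtg rl (\<lambda>\<beta>. S (tvar M rl \<beta>)) (tvar M rl)) (Sset M \<eta> U m)"
proof -
  let ?\<Phi> = "(\<lambda>(\<alpha>, b). if b then S (tvar M rl \<alpha>) else tvar M rl \<alpha>)"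
  have d: "?\<Phi> (dot M rl, b) = 1" for b using S1 by (simp add: tvar_def)
  show ?thesis unfolding coprod_str_alt E_sum E_wtg
    using E_tvar2[of ?\<Phi> M rl, OF d] by simp
qed

context
  fixes M :: "nat set \<Rightarrow> 'm set" and rl :: "(nat \<Rightarrow> nat) \<Rightarrow> nat set \<Rightarrow> 'm \<Rightarrow> 'm"
    and \<eta> :: "nat set set \<times> (nat set \<Rightarrow> 'm) \<Rightarrow> 'm \<Rightarrow> 'm"
  assumes op: "set_operad M rl \<eta>"
begin

lemma sp': "species M rl" by (rule op_sp[OF op])

lemma rep_tp:
  assumes "finite U" "m \<in> M U"
  shows "rep (tp rl U m) \<in> tp rl U m" "finite (fst (rep (tp rl U m)))"
    "snd (rep (tp rl U m)) \<in> M (fst (rep (tp rl U m)))"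
    "tp rl (fst (rep (tp rl U m))) (snd (rep (tp rl U m))) = tp rl U m"
    "tsz (tp rl U m) = card U"
proof -
  show r: "rep (tp rl U m) \<in> tp rl U m" unfolding rep_def using tp_self[OF sp' assms] by (rule someI)
  obtain V m2 where v: "rep (tp rl U m) = (V, m2)" by (cases "rep (tp rl U m)")
  show "finite (fst (rep (tp rl U m)))" "snd (rep (tp rl U m)) \<in> M (fst (rep (tp rl U m)))"
    "tp rl (fst (rep (tp rl U m))) (snd (rep (tp rl U m))) = tp rl U m"
    using tp_mem[OF sp' assms, of V m2] r v by auto
  show "tsz (tp rl U m) = card U" unfolding tsz_def using tp_mem(4)[OF sp' assms, of V m2] r v by simp
qed

lemma types_E: "\<alpha> \<in> types M rl \<Longrightarrow> (\<And>U m. finite U \<Longrightarrow> m \<in> M U \<Longrightarrow> \<alpha> = tp rl U m \<Longrightarrow> P) \<Longrightarrow> P"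
  unfolding types_def by blast

lemma types_I: "finite U \<Longrightarrow> m \<in> M U \<Longrightarrow> tp rl U m \<in> types M rl"
  unfolding types_def by blast

lemma dot_types: "dot M rl \<in> types M rl" "tsz (dot M rl) = 1"
proof -
  have e: "the_elem (M {1}) \<in> M {1}" using op_single_elem[OF op, of 1] by blast
  show "dot M rl \<in> types M rl" unfolding dot_def by (rule types_I[OF _ e]) simp
  show "tsz (dot M rl) = 1" unfolding dot_def using rep_tp(5)[OF _ e] by simp
qed

lemma nondot_size: "\<alpha> \<in> types M rl \<Longrightarrow> \<alpha> \<noteq> dot M rl \<Longrightarrow> 2 \<le> tsz \<alpha>"
proof (erule types_E)
  fix U m assume U: "finite U" "m \<in> M U" "\<alpha> = tp rl U m" and nd: "\<alpha> \<noteq> dot M rl"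
  have "U \<noteq> {}" using op_M_ne[OF op U(2)] .
  hence "card U \<noteq> 0" using U(1) by simp
  moreover have "card U \<noteq> 1"
  proof
    assume "card U = 1"
    then obtain u where "U = {u}" using card_1_singletonE by blast
    thus False using tp_single[OF op] U nd by simp
  qed
  ultimately show "2 \<le> tsz \<alpha>" using rep_tp(5)[OF U(1,2)] U(3) by simp
qed

lemma rest_types:
  assumes fU: "finite U" and m: "m \<in> M U" and x: "((\<pi>, f), m') \<in> Rest M \<eta> U m"
  shows "\<And>B. B \<in> \<pi> \<Longrightarrow> tp rl B (f B) \<in> types M rl \<and> tsz (tp rl B (f B)) < card U"
    "tp rl (Min ` \<pi>) m' \<in> types M rl"
proof -
  have c: "((\<pi>, f), m') \<in> compM M U" using x by (simp add: Rest_def[OF op] Sset_def)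
  have p: "partition_on U \<pi>" and fM: "\<forall>B\<in>\<pi>. f B \<in> M B" and m': "m' \<in> M (Min ` \<pi>)"
    using c by (auto simp: compM_iff)
  fix B assume B: "B \<in> \<pi>"
  have fB: "finite B" using part_fin[OF fU p B] .
  show "tp rl B (f B) \<in> types M rl \<and> tsz (tp rl B (f B)) < card U"
    using types_I[OF fB] rep_tp(5)[OF fB] fM B Rest_small(1)[OF op fU m x] by auto
next
  have c: "((\<pi>, f), m') \<in> compM M U" using x by (simp add: Rest_def[OF op] Sset_def)
  have p: "partition_on U \<pi>" and m': "m' \<in> M (Min ` \<pi>)" using c by (auto simp: compM_iff)
  show "tp rl (Min ` \<pi>) m' \<in> types M rl" using types_I[OF _ m'] part_finite[OF fU p] by simp
qed

primrec s :: "nat \<Rightarrow> (nat set \<times> 'm) set \<Rightarrow> ((nat set \<times> 'm) set, 'k::comm_ring_1) mpoly" where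
  "s 0 \<alpha> = tvar M rl \<alpha>"
| "s (Suc k) \<alpha> = (if \<alpha> = dot M rl then 1 else
     - (tvar M rl \<alpha> + (\<Sum>x\<in>Rest M \<eta> (fst (rep \<alpha>)) (snd (rep \<alpha>)). wtg rl (s k) (tvar M rl) x)))"

definition Sf :: "(nat set \<times> 'm) set \<Rightarrow> ((nat set \<times> 'm) set, 'k::comm_ring_1) mpoly" where
  "Sf \<alpha> = s (tsz \<alpha>) \<alpha>"

lemma s_dot: "s k (dot M rl) = 1"
  by (cases k) (simp_all add: tvar_def)

lemma rest_wtg_cong:
  assumes "\<alpha> \<in> types M rl" "x \<in> Rest M \<eta> (fst (rep \<alpha>)) (snd (rep \<alpha>))"
    and "\<And>\<beta>. \<beta> \<in> types M rl \<Longrightarrow> tsz \<beta> < tsz \<alpha> \<Longrightarrow> g1 \<beta> = g2 \<beta>"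
  shows "wtg rl g1 h x = wtg rl g2 h x"
proof -
  obtain U m where U: "finite U" "m \<in> M U" "\<alpha> = tp rl U m" using assms(1) by (rule types_E)
  let ?U = "fst (rep \<alpha>)" and ?m = "snd (rep \<alpha>)"
  have r: "finite ?U" "?m \<in> M ?U" "card ?U = tsz \<alpha>"
    using rep_tp[OF U(1,2)] U(3) by (auto simp: tsz_def)
  obtain \<pi> f m' where x: "x = ((\<pi>, f), m')" by (metis prod.exhaust)
  show ?thesis
  proof (rule wtg_cong)
    fix B assume "B \<in> fst (fst x)"
    hence B: "B \<in> \<pi>" using x by simp
    from rest_types(1)[OF r(1,2) assms(2)[unfolded x] B] r(3)
    show "g1 (tp rl B (snd (fst x) B)) = g2 (tp rl B (snd (fst x) B))" using assms(3) x by simp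
  qed
qed

lemma s_stable: "\<alpha> \<in> types M rl \<Longrightarrow> tsz \<alpha> \<le> k \<Longrightarrow> s k \<alpha> = (Sf \<alpha> :: (_, 'k::comm_ring_1) mpoly)"
proof (induction "tsz \<alpha>" arbitrary: \<alpha> k rule: less_induct)
  case less
  show ?case
  proof (cases "\<alpha> = dot M rl")
    case True thus ?thesis by (simp add: Sf_def s_dot)
  next
    case False
    have n2: "2 \<le> tsz \<alpha>" using nondot_size[OF less.prems(1) False] .
    obtain k' where k': "k = Suc k'" using less.prems(2) n2 by (cases k) auto
    obtain n' where n': "tsz \<alpha> = Suc n'" using n2 by (cases "tsz \<alpha>") auto
    have hyp: "s k' \<beta> = (s n' \<beta> :: (_, 'k) mpoly)" if b: "\<beta> \<in> types M rl" "tsz \<beta> < tsz \<alpha>" for \<beta>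
    proof -
      have "s k' \<beta> = (Sf \<beta> :: (_, 'k) mpoly)" using less.hyps[OF b(2) b(1)] b(2) k' less.prems(2) by simp
      moreover have "s n' \<beta> = (Sf \<beta> :: (_, 'k) mpoly)" using less.hyps[OF b(2) b(1)] b(2) n' by simp
      ultimately show ?thesis by simp
    qed
    have eq: "wtg rl (s k') (tvar M rl) x = (wtg rl (s n') (tvar M rl) x :: (_, 'k) mpoly)"
      if x: "x \<in> Rest M \<eta> (fst (rep \<alpha>)) (snd (rep \<alpha>))" for x
      by (rule rest_wtg_cong[OF less.prems(1) x hyp])
    have "s k \<alpha> = (s (Suc n') \<alpha> :: (_, 'k) mpoly)" using False eq k' by (simp cong: sum.cong)
    thus ?thesis by (simp add: Sf_def n')
  qed
qed

lemma s_NM: "\<alpha> \<in> types M rl \<Longrightarrow> (s k \<alpha> :: (_, 'k::comm_ring_1) mpoly) \<in> NM M rl"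
proof (induction k arbitrary: \<alpha>)
  case 0 thus ?case by (simp add: NM_tvar)
next
  case (Suc k)
  show ?case
  proof (cases "\<alpha> = dot M rl")
    case False
    obtain U m where U: "finite U" "m \<in> M U" "\<alpha> = tp rl U m" using Suc.prems by (rule types_E)
    let ?U = "fst (rep \<alpha>)" and ?m = "snd (rep \<alpha>)"
    have r: "finite ?U" "?m \<in> M ?U" using rep_tp[OF U(1,2)] U(3) by auto
    have "(wtg rl (s k) (tvar M rl) x :: (_, 'k) mpoly) \<in> NM M rl" if x: "x \<in> Rest M \<eta> ?U ?m" for x
    proof -
      obtain \<pi> f m' where x': "x = ((\<pi>, f), m')" by (metis prod.exhaust)
      show ?thesis unfolding x' wtg_eq using rest_types[OF r x[unfolded x']] Suc.IH
        by (intro NM_mult NM_prod NM_tvar) auto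
    qed
    hence "(- (tvar M rl \<alpha> + (\<Sum>x\<in>Rest M \<eta> ?U ?m. wtg rl (s k) (tvar M rl) x)) :: (_, 'k) mpoly) \<in> NM M rl"
      using Suc.prems by (intro NM_uminus NM_add NM_tvar NM_sum) auto
    thus ?thesis using False by simp
  qed simp
qed

definition Smap :: "((nat set \<times> 'm) set, 'k::comm_ring_1) mpoly \<Rightarrow> ((nat set \<times> 'm) set, 'k) mpoly" where
  "Smap p = E (\<lambda>\<alpha>. if \<alpha> \<in> types M rl \<and> \<alpha> \<noteq> dot M rl then Sf \<alpha> else pvar \<alpha>) p"

lemma Smap_tvar: "\<beta> \<in> types M rl \<Longrightarrow> Smap (tvar M rl \<beta>) = Sf \<beta>"
  by (cases "\<beta> = dot M rl") (auto simp: Smap_def tvar_def Sf_def dot_types s_dot)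

lemma Smap_one: "Smap 1 = 1" by (simp add: Smap_def)

lemma gen_zero:
  assumes a: "\<alpha> \<in> types M rl" "\<alpha> \<noteq> dot M rl"
  shows "E (\<lambda>(\<alpha>, b). if b then Smap (tvar M rl \<alpha>) else tvar M rl \<alpha>)
           (coprod_str M rl \<eta> (fst (rep \<alpha>)) (snd (rep \<alpha>))) = (0 :: (_, 'k::comm_ring_1) mpoly)"
proof -
  obtain U m where U: "finite U" "m \<in> M U" "\<alpha> = tp rl U m" using a(1) by (rule types_E)
  let ?U = "fst (rep \<alpha>)" and ?m = "snd (rep \<alpha>)"
  have r: "finite ?U" "?m \<in> M ?U" "tp rl ?U ?m = \<alpha>" "card ?U = tsz \<alpha>"
    using rep_tp[OF U(1,2)] U(3) by (auto simp: tsz_def)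
  have n2: "2 \<le> tsz \<alpha>" using nondot_size[OF a] .
  obtain n' where n': "tsz \<alpha> = Suc n'" using n2 by (cases "tsz \<alpha>") auto
  let ?g = "\<lambda>\<beta>. Smap (tvar M rl \<beta>) :: (_, 'k) mpoly"
  have g1: "?g (dot M rl) = 1" by (simp add: tvar_def Smap_one)
  have "E (\<lambda>(\<alpha>, b). if b then Smap (tvar M rl \<alpha>) else tvar M rl \<alpha>) (coprod_str M rl \<eta> ?U ?m)
      = sum (wtg rl ?g (tvar M rl)) (Sset M \<eta> ?U ?m)"
    by (rule E_coprod_str[where S=Smap, OF Smap_one])
  also have "\<dots> = tvar M rl \<alpha> + ?g \<alpha> * 1 + sum (wtg rl ?g (tvar M rl)) (Rest M \<eta> ?U ?m)"
    using Sset_split[OF op r(1,2), of ?g "tvar M rl", OF _ g1] r n2 by (simp add: tvar_def)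
  also have "sum (wtg rl ?g (tvar M rl)) (Rest M \<eta> ?U ?m) = (sum (wtg rl (s n') (tvar M rl)) (Rest M \<eta> ?U ?m) :: (_, 'k) mpoly)"
  proof (rule sum.cong[OF refl], rule rest_wtg_cong[OF a(1)])
    fix x \<beta> assume "x \<in> Rest M \<eta> ?U ?m" and b: "\<beta> \<in> types M rl" "tsz \<beta> < tsz \<alpha>"
    have le: "tsz \<beta> \<le> n'" using b(2) n' by simp
    have "Smap (tvar M rl \<beta>) = (Sf \<beta> :: (_, 'k) mpoly)" by (rule Smap_tvar[OF b(1)])
    moreover have "s n' \<beta> = (Sf \<beta> :: (_, 'k) mpoly)" by (rule s_stable[OF b(1) le])
    ultimately show "?g \<beta> = (s n' \<beta> :: (_, 'k) mpoly)" by simp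
  qed simp
  also have "?g \<alpha> = Sf \<alpha>" using Smap_tvar[OF a(1)] .
  also have "Sf \<alpha> = (s (Suc n') \<alpha> :: (_, 'k) mpoly)" by (simp add: Sf_def n')
  finally show ?thesis using a(2) by simp
qed

lemma coprod_pvar: "coprod M rl \<eta> (pvar \<alpha> :: (_, 'k::comm_ring_1) mpoly) = (case rep \<alpha> of (U, m) \<Rightarrow> coprod_str M rl \<eta> U m)"
  by (simp add: coprod_def rep_def)

lemma Smap_antipode: "is_antipode M rl \<eta> (Smap :: _ \<Rightarrow> ((nat set \<times> 'm) set, 'k::comm_ring_1) mpoly)"
  unfolding is_antipode_def
proof (intro conjI ballI)
  show "Smap ` NM M rl \<subseteq> NM M rl"
  proof
    fix q assume "q \<in> Smap ` NM M rl"
    then obtain p where p: "p \<in> NM M rl" "q = Smap p" by blast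
    show "q \<in> NM M rl" unfolding p(2) Smap_def
    proof (rule NM_E)
      fix mn v assume "mn \<in> Poly_Mapping.keys p" "v \<in> Poly_Mapping.keys mn"
      hence v: "v \<in> types M rl" "v \<noteq> dot M rl" using p(1) unfolding NM_iff by blast+
      show "(if v \<in> types M rl \<and> v \<noteq> dot M rl then Sf v else pvar v) \<in> NM M rl"
        using v s_NM[OF v(1)] by (simp add: Sf_def)
    qed
  qed
  show "alg_hom_on (NM M rl) pconst (Smap :: _ \<Rightarrow> ((nat set \<times> 'm) set, 'k) mpoly)"
    unfolding alg_hom_on_def Smap_def by (simp add: E_add E_mult)
  fix p :: "((nat set \<times> 'm) set, 'k) mpoly" assume p: "p \<in> NM M rl"
  let ?\<Phi> = "(\<lambda>(\<alpha>, b). if b then Smap (tvar M rl \<alpha>) else tvar M rl \<alpha>)"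
  have "E ?\<Phi> (coprod M rl \<eta> p) = E (\<lambda>\<alpha>. E ?\<Phi> (case rep \<alpha> of (U, m) \<Rightarrow> coprod_str M rl \<eta> U m)) p"
    unfolding coprod_def E_comp by (simp add: rep_def)
  also have "\<dots> = pconst (Poly_Mapping.lookup p 0)"
  proof (rule E_all_zero)
    fix mn \<alpha> assume "mn \<in> Poly_Mapping.keys p" "\<alpha> \<in> Poly_Mapping.keys mn"
    hence a: "\<alpha> \<in> types M rl" "\<alpha> \<noteq> dot M rl" using p by (auto simp: NM_iff)
    show "E ?\<Phi> (case rep \<alpha> of (U, m) \<Rightarrow> coprod_str M rl \<eta> U m) = 0"
      using gen_zero[OF a] by (simp add: case_prod_beta)
  qed
  finally show "E ?\<Phi> (coprod M rl \<eta> p) = pconst (counit p)" by (simp add: counit_def)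
qed

lemma antipode_Sset_zero:
  fixes S :: "((nat set \<times> 'm) set, 'k::comm_ring_1) mpoly \<Rightarrow> ((nat set \<times> 'm) set, 'k) mpoly"
  assumes S: "is_antipode M rl \<eta> S" and fU: "finite U" and m: "m \<in> M U" and c2: "2 \<le> card U"
  shows "sum (wtg rl (\<lambda>\<beta>. S (tvar M rl \<beta>)) (tvar M rl)) (Sset M \<eta> U m) = 0"
proof -
  let ?\<alpha> = "tp rl U m"
  have a: "?\<alpha> \<in> types M rl" "?\<alpha> \<noteq> dot M rl" using types_I[OF fU m] tp_ne_dot[OF op fU m] c2 by auto
  have S1: "S 1 = 1" using S by (simp add: is_antipode_def alg_hom_on_def)
  have pv: "(pvar ?\<alpha> :: (_, 'k) mpoly) \<in> NM M rl" using NM_pvar[OF a] .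
  let ?\<Phi> = "(\<lambda>(\<alpha>, b). if b then S (tvar M rl \<alpha>) else tvar M rl \<alpha>)"
  have "E ?\<Phi> (coprod M rl \<eta> (pvar ?\<alpha>)) = pconst (counit (pvar ?\<alpha> :: (_, 'k) mpoly))"
    using S pv unfolding is_antipode_def by blast
  also have "counit (pvar ?\<alpha> :: (_, 'k) mpoly) = 0"
  proof -
    have "Poly_Mapping.single ?\<alpha> (1::nat) \<noteq> 0"
      by (metis keys_single keys_zero one_neq_zero singletonI empty_iff)
    thus ?thesis by (simp add: counit_def pvar_def lookup_single when_def)
  qed
  finally have z: "E ?\<Phi> (coprod M rl \<eta> (pvar ?\<alpha>)) = 0" by simp
  obtain V m2 where v: "rep ?\<alpha> = (V, m2)" by (cases "rep ?\<alpha>")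
  have "(V, m2) \<in> ?\<alpha>" using rep_tp(1)[OF fU m] v by simp
  hence "coprod_str M rl \<eta> V m2 = (coprod_str M rl \<eta> U m :: (_, 'k) mpoly)" by (rule coprod_str_transport[OF op fU m])
  moreover have "coprod M rl \<eta> (pvar ?\<alpha> :: (_, 'k) mpoly) = coprod_str M rl \<eta> V m2"
    using coprod_pvar[where 'k='k, of ?\<alpha>] v by simp
  ultimately have "coprod M rl \<eta> (pvar ?\<alpha> :: (_, 'k) mpoly) = coprod_str M rl \<eta> U m" by simp
  thus ?thesis using z E_coprod_str[where S=S, OF S1] by simp
qed

end


abbreviation Parts :: "nat set \<Rightarrow> nat \<Rightarrow> nat set set set" where
  "Parts U k \<equiv> {\<pi>. partition_on U \<pi> \<and> card \<pi> = k}"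

lemma Parts_finite: "finite U \<Longrightarrow> finite (Parts U k)"
  using finitely_many_partition_on by (rule finite_subset[rotated]) auto

lemma Parts_empty: "Parts {} k = (if k = 0 then {{}} else {})"
  by (auto simp: partition_on_empty)

lemma Parts_zero: assumes "finite U" "U \<noteq> {}" shows "Parts U 0 = {}"
proof -
  have "\<pi> = {}" if "partition_on U \<pi>" "card \<pi> = 0" for \<pi>
    using part_finite[OF assms(1) that(1)] that(2) by simp
  thus ?thesis using assms(2) by (auto simp: partition_on_def)
qed

lemma Parts_decomp:
  assumes fU: "finite U" and u: "u \<in> U"
  shows "bij_betw (\<lambda>(C, \<pi>'). insert C \<pi>')
     (Sigma {C. u \<in> C \<and> C \<subseteq> U} (\<lambda>C. Parts (U - C) k)) (Parts U (Suc k))"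
proof -
  have ins: "partition_on U (insert C \<pi>') \<and> C \<notin> \<pi>'"
    if C: "u \<in> C" "C \<subseteq> U" and p: "partition_on (U - C) \<pi>'" for C \<pi>'
  proof -
    have d: "disjnt C (\<Union>\<pi>')" using partition_onD1[OF p] by (auto simp: disjnt_def)
    have "C \<notin> \<pi>'" using C part_sub[OF p] by blast
    thus ?thesis using partition_on_insert[OF d] p C by auto
  qed
  show ?thesis unfolding bij_betw_def
  proof (intro conjI)
    show "inj_on (\<lambda>(C, \<pi>'). insert C \<pi>') (Sigma {C. u \<in> C \<and> C \<subseteq> U} (\<lambda>C. Parts (U - C) k))"
    proof (rule inj_onI)
      fix x y assume x: "x \<in> Sigma {C. u \<in> C \<and> C \<subseteq> U} (\<lambda>C. Parts (U - C) k)"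
        and y: "y \<in> Sigma {C. u \<in> C \<and> C \<subseteq> U} (\<lambda>C. Parts (U - C) k)"
        and eq0: "(\<lambda>(C, \<pi>'). insert C \<pi>') x = (\<lambda>(C, \<pi>'). insert C \<pi>') y"
      obtain C1 \<pi>1 where x': "x = (C1, \<pi>1)" by (cases x)
      obtain C2 \<pi>2 where y': "y = (C2, \<pi>2)" by (cases y)
      have c1: "u \<in> C1" "C1 \<subseteq> U" "partition_on (U - C1) \<pi>1" using x x' by auto
      have c2: "u \<in> C2" "C2 \<subseteq> U" "partition_on (U - C2) \<pi>2" using y y' by auto
      have eq: "insert C1 \<pi>1 = insert C2 \<pi>2" using eq0 x' y' by simp
      have i1: "partition_on U (insert C1 \<pi>1)" "C1 \<notin> \<pi>1" using ins[OF c1(1-3)] by auto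
      have i2: "C2 \<notin> \<pi>2" using ins[OF c2(1-3)] by auto
      have "C1 = C2" using part_disj[OF i1(1), of C1 C2 u] eq c1 c2 by auto
      moreover hence "\<pi>1 = \<pi>2" using eq i1(2) i2
        by (metis insert_ident)
      ultimately show "x = y" using x' y' by simp
    qed
    show "(\<lambda>(C, \<pi>'). insert C \<pi>') ` Sigma {C. u \<in> C \<and> C \<subseteq> U} (\<lambda>C. Parts (U - C) k) = Parts U (Suc k)"
    proof
      show "(\<lambda>(C, \<pi>'). insert C \<pi>') ` Sigma {C. u \<in> C \<and> C \<subseteq> U} (\<lambda>C. Parts (U - C) k) \<subseteq> Parts U (Suc k)"
      proof
        fix z assume "z \<in> (\<lambda>(C, \<pi>'). insert C \<pi>') ` Sigma {C. u \<in> C \<and> C \<subseteq> U} (\<lambda>C. Parts (U - C) k)"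
        then obtain C \<pi>' where z: "z = insert C \<pi>'" and c: "u \<in> C" "C \<subseteq> U" "partition_on (U - C) \<pi>'" "card \<pi>' = k"
          by auto
        have i: "partition_on U (insert C \<pi>')" "C \<notin> \<pi>'" using ins[OF c(1-3)] by auto
        have "finite \<pi>'" using part_finite[OF _ c(3)] fU by simp
        thus "z \<in> Parts U (Suc k)" using i c(4) z by simp
      qed
      show "Parts U (Suc k) \<subseteq> (\<lambda>(C, \<pi>'). insert C \<pi>') ` Sigma {C. u \<in> C \<and> C \<subseteq> U} (\<lambda>C. Parts (U - C) k)"
      proof
        fix \<pi> assume "\<pi> \<in> Parts U (Suc k)"
        hence p: "partition_on U \<pi>" "card \<pi> = Suc k" by auto
        obtain C where C: "C \<in> \<pi>" "u \<in> C" using partition_onD1[OF p(1)] u by blast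
        let ?\<pi>' = "\<pi> - {C}"
        have d: "disjnt C (\<Union>?\<pi>')" using p(1) C(1) by (auto simp: partition_on_def disjoint_def disjnt_def)
        have pi: "\<pi> = insert C ?\<pi>'" using C by blast
        have "partition_on (U - C) ?\<pi>'" using partition_on_insert[OF d, of U] p(1) pi by simp
        moreover have "card ?\<pi>' = k" using p C part_finite[OF fU p(1)] by simp
        moreover have "C \<subseteq> U" using part_sub[OF p(1) C(1)] .
        ultimately show "\<pi> \<in> (\<lambda>(C, \<pi>'). insert C \<pi>') ` Sigma {C. u \<in> C \<and> C \<subseteq> U} (\<lambda>C. Parts (U - C) k)"
          using C pi by (auto intro!: image_eqI[of _ _ "(C, ?\<pi>')"])
      qed
    qed
  qed
qed

lemma card_Cs:
  assumes fU: "finite U" and u: "u \<in> U"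
  shows "card {C. u \<in> C \<and> C \<subseteq> U \<and> card C = Suc i} = (card U - 1) choose i"
proof -
  have "bij_betw (insert u) {D. D \<subseteq> U - {u} \<and> card D = i} {C. u \<in> C \<and> C \<subseteq> U \<and> card C = Suc i}"
  proof (rule bij_betw_byWitness[where f' = "\<lambda>C. C - {u}"])
    show "\<forall>a\<in>{D. D \<subseteq> U - {u} \<and> card D = i}. insert u a - {u} = a" by auto
    show "\<forall>a'\<in>{C. u \<in> C \<and> C \<subseteq> U \<and> card C = Suc i}. insert u (a' - {u}) = a'" by auto
    show "insert u ` {D. D \<subseteq> U - {u} \<and> card D = i} \<subseteq> {C. u \<in> C \<and> C \<subseteq> U \<and> card C = Suc i}"
    proof clarify
      fix D assume "D \<subseteq> U - {u}" "i = card D"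
      moreover hence "finite D" using fU finite_subset by blast
      moreover have "u \<notin> D" using \<open>D \<subseteq> U - {u}\<close> by blast
      ultimately show "u \<in> insert u D \<and> insert u D \<subseteq> U \<and> card (insert u D) = Suc (card D)" using u by auto
    qed
    show "(\<lambda>C. C - {u}) ` {C. u \<in> C \<and> C \<subseteq> U \<and> card C = Suc i} \<subseteq> {D. D \<subseteq> U - {u} \<and> card D = i}"
    proof clarify
      fix C assume "u \<in> C" "C \<subseteq> U" "card C = Suc i"
      moreover hence "finite C" using fU finite_subset by blast
      ultimately show "C - {u} \<subseteq> U - {u} \<and> card (C - {u}) = i" by auto
    qed
  qed
  hence "card {C. u \<in> C \<and> C \<subseteq> U \<and> card C = Suc i} = card {D. D \<subseteq> U - {u} \<and> card D = i}"
    by (simp add: bij_betw_same_card)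
  also have "\<dots> = card (U - {u}) choose i" using n_subsets[of "U - {u}" i] fU by simp
  finally show ?thesis using u fU by simp
qed



lemma sum_by_card:
  assumes fU: "finite U" and u: "u \<in> U"
  shows "(\<Sum>C\<in>{C. u \<in> C \<and> C \<subseteq> U}. F (card C)) =
         (\<Sum>i=0..card U - 1. of_nat ((card U - 1) choose i) * (F (Suc i) :: 'a::comm_semiring_1))"
proof -
  let ?Cs = "{C. u \<in> C \<and> C \<subseteq> U}"
  have fC: "finite ?Cs" by (rule finite_subset[of _ "Pow U"]) (use fU in auto)
  have img: "card ` ?Cs \<subseteq> Suc ` {0..card U - 1}"
  proof
    fix j assume "j \<in> card ` ?Cs"
    then obtain C where C: "u \<in> C" "C \<subseteq> U" "j = card C" by blast
    have "finite C" using C fU finite_subset by blast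
    hence "1 \<le> card C" using C(1) by (metis One_nat_def Suc_leI card_gt_0_iff empty_iff)
    moreover have "card C \<le> card U" using card_mono[OF fU C(2)] .
    ultimately show "j \<in> Suc ` {0..card U - 1}" using C(3)
      by (auto intro!: image_eqI[of _ _ "card C - 1"])
  qed
  have "(\<Sum>C\<in>?Cs. F (card C)) = (\<Sum>j\<in>Suc ` {0..card U - 1}. \<Sum>C\<in>{C \<in> ?Cs. card C = j}. F (card C))"
    using sum.group[OF fC _ img, of "\<lambda>C. F (card C)"] by simp
  also have "\<dots> = (\<Sum>i=0..card U - 1. \<Sum>C\<in>{C \<in> ?Cs. card C = Suc i}. F (card C))"
    by (rule sum.reindex[of Suc, unfolded comp_def]) simp
  also have "\<dots> = (\<Sum>i=0..card U - 1. of_nat ((card U - 1) choose i) * F (Suc i))"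
  proof (rule sum.cong[OF refl])
    fix i
    have "(\<Sum>C\<in>{C \<in> ?Cs. card C = Suc i}. F (card C)) = (\<Sum>C\<in>{C \<in> ?Cs. card C = Suc i}. F (Suc i))"
      by (rule sum.cong) auto
    also have "\<dots> = of_nat (card {C \<in> ?Cs. card C = Suc i}) * F (Suc i)" by simp
    also have "{C \<in> ?Cs. card C = Suc i} = {C. u \<in> C \<and> C \<subseteq> U \<and> card C = Suc i}" by auto
    finally show "(\<Sum>C\<in>{C \<in> ?Cs. card C = Suc i}. F (card C)) = of_nat ((card U - 1) choose i) * F (Suc i)"
      using card_Cs[OF fU u, of i] by simp
  qed
  finally show ?thesis .
qed

context
  fixes G :: "nat \<Rightarrow> 'a::comm_ring_1" and B :: "'a fps"
  assumes B0: "B $ 0 = 0" and BG: "\<And>b. of_nat (fact b) * B $ b = G b"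
begin


lemma deriv_coeff:
  "of_nat (Suc n') * (B ^ Suc k') $ Suc n' =
     of_nat (Suc k') * (\<Sum>i=0..n'. of_nat (Suc i) * B $ Suc i * (B ^ k') $ (n' - i))"
proof -
  have "of_nat (Suc n') * (B ^ Suc k') $ Suc n' = fps_deriv (B ^ Suc k') $ n'"
    by (simp only: fps_deriv_nth Suc_eq_plus1)
  also have "\<dots> = (of_nat (Suc k') * fps_deriv B * B ^ (Suc k' - 1)) $ n'"
    by (subst fps_deriv_power') (rule refl)
  also have "\<dots> = (fps_const (of_nat (Suc k')) * (fps_deriv B * B ^ k')) $ n'"
    by (simp only: fps_of_nat mult.assoc diff_Suc_1)
  also have "\<dots> = of_nat (Suc k') * (\<Sum>i=0..n'. of_nat (Suc i) * B $ Suc i * (B ^ k') $ (n' - i))"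
    by (simp only: fps_mult_left_const_nth) (simp add: fps_mult_nth mult.assoc del: of_nat_Suc)
  finally show ?thesis .
qed

lemma part_sum:
  "finite U \<Longrightarrow> of_nat (fact k) * (\<Sum>\<pi>\<in>Parts U k. \<Prod>C\<in>\<pi>. G (card C)) = of_nat (fact (card U)) * (B ^ k) $ card U"
proof (induction "card U" arbitrary: U k rule: less_induct)
  case less
  show ?case
  proof (cases "U = {}")
    case True
    thus ?thesis using startsby_zero_power[OF B0, of k] by (cases k) (simp_all add: Parts_empty)
  next
    case False
    note fU = less.prems
    obtain n' where n': "card U = Suc n'" using False fU by (cases "card U") auto
    define u where "u = Min U"
    have u: "u \<in> U" using False fU by (simp add: u_def)
    show ?thesis
    proof (cases k)
      case 0
      have e: "Parts U 0 = {}" by (rule Parts_zero[OF fU False])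
      show ?thesis unfolding 0 e using n' by simp
    next
      case (Suc k')
      let ?Cs = "{C. u \<in> C \<and> C \<subseteq> U}"
      let ?P = "\<lambda>V k. (\<Sum>\<pi>\<in>Parts V k. \<Prod>C\<in>\<pi>. G (card C))"
      have fC: "finite ?Cs" by (rule finite_subset[of _ "Pow U"]) (use fU in auto)
      have inner: "(\<Prod>D\<in>insert C \<pi>'. G (card D)) = G (card C) * (\<Prod>D\<in>\<pi>'. G (card D))"
        if "C \<in> ?Cs" "\<pi>' \<in> Parts (U - C) k'" for C \<pi>'
      proof -
        have p: "partition_on (U - C) \<pi>'" using that by simp
        have "C \<notin> \<pi>'" using that part_sub[OF p] by blast
        moreover have "finite \<pi>'" using part_finite[OF _ p] fU by simp
        ultimately show ?thesis by simp
      qed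
      have "?P U (Suc k') = (\<Sum>x\<in>Sigma ?Cs (\<lambda>C. Parts (U - C) k'). \<Prod>D\<in>(\<lambda>(C, \<pi>'). insert C \<pi>') x. G (card D))"
        using sum.reindex_bij_betw[OF Parts_decomp[OF fU u, of k'], of "\<lambda>\<pi>. \<Prod>C\<in>\<pi>. G (card C)"] by simp
      also have "\<dots> = (\<Sum>(C, \<pi>')\<in>Sigma ?Cs (\<lambda>C. Parts (U - C) k'). \<Prod>D\<in>insert C \<pi>'. G (card D))"
        by (rule sum.cong) (auto split: prod.splits)
      also have "\<dots> = (\<Sum>C\<in>?Cs. \<Sum>\<pi>'\<in>Parts (U - C) k'. \<Prod>D\<in>insert C \<pi>'. G (card D))"
        by (rule sum.Sigma[symmetric]) (use fC fU Parts_finite in auto)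
      also have "\<dots> = (\<Sum>C\<in>?Cs. \<Sum>\<pi>'\<in>Parts (U - C) k'. G (card C) * (\<Prod>D\<in>\<pi>'. G (card D)))"
      proof (rule sum.cong[OF refl], rule sum.cong[OF refl])
        fix C \<pi>' assume "C \<in> ?Cs" "\<pi>' \<in> Parts (U - C) k'"
        thus "(\<Prod>D\<in>insert C \<pi>'. G (card D)) = G (card C) * (\<Prod>D\<in>\<pi>'. G (card D))" by (rule inner)
      qed
      also have "\<dots> = (\<Sum>C\<in>?Cs. G (card C) * ?P (U - C) k')"
        by (simp only: sum_distrib_left)
      finally have PU: "?P U (Suc k') = (\<Sum>C\<in>?Cs. G (card C) * ?P (U - C) k')" .
      have IH: "of_nat (fact k') * ?P (U - C) k' = of_nat (fact (card U - card C)) * (B ^ k') $ (card U - card C)"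
        if "C \<in> ?Cs" for C
      proof -
        have fCC: "finite C" using that fU finite_subset by blast
        have cU: "card (U - C) = card U - card C" using that fCC by (simp add: card_Diff_subset)
        have "card (U - C) < card U" using that fU fCC by (intro psubset_card_mono) auto
        thus ?thesis using less.hyps[of "U - C" k'] fU cU by simp
      qed
      define F where "F j = G j * of_nat (fact (card U - j)) * (B ^ k') $ (card U - j)" for j
      have "of_nat (fact k) * ?P U k = of_nat (Suc k') * (of_nat (fact k') * (\<Sum>C\<in>?Cs. G (card C) * ?P (U - C) k'))"
        unfolding Suc PU by (simp only: fact_Suc of_nat_mult mult.assoc of_nat_id)
      also have "\<dots> = of_nat (Suc k') * (\<Sum>C\<in>?Cs. G (card C) * (of_nat (fact k') * ?P (U - C) k'))"
        by (simp only: sum_distrib_left mult.left_commute)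
      also have "\<dots> = of_nat (Suc k') * (\<Sum>C\<in>?Cs. F (card C))"
      proof (intro arg_cong[where f = "\<lambda>x. of_nat (Suc k') * x"] sum.cong[OF refl])
        fix C assume "C \<in> ?Cs"
        thus "G (card C) * (of_nat (fact k') * ?P (U - C) k') = F (card C)"
          using IH[of C] by (simp add: F_def mult.assoc)
      qed
      also have "\<dots> = of_nat (Suc k') * (\<Sum>i=0..n'. of_nat (n' choose i) * F (Suc i))"
        using sum_by_card[OF fU u, of F] n' by simp
      also have "\<dots> = of_nat (Suc k') * (\<Sum>i=0..n'. of_nat (fact n') * (of_nat (Suc i) * B $ Suc i * (B ^ k') $ (n' - i)))"
      proof (intro arg_cong[where f = "\<lambda>x. of_nat (Suc k') * x"] sum.cong[OF refl])
        fix i assume "i \<in> {0..n'}"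
        hence i: "i \<le> n'" by simp
        have nat_id: "(n' choose i) * fact (Suc i) * fact (n' - i) = fact n' * Suc i"
          using binomial_fact_lemma[OF i] by (simp add: algebra_simps)
        have "of_nat (n' choose i) * F (Suc i)
            = of_nat (n' choose i) * (of_nat (fact (Suc i)) * B $ Suc i) * of_nat (fact (n' - i)) * (B ^ k') $ (n' - i)"
          using BG[of "Suc i"] n' by (simp add: F_def)
        also have "\<dots> = of_nat ((n' choose i) * fact (Suc i) * fact (n' - i)) * B $ Suc i * (B ^ k') $ (n' - i)"
          by (simp only: of_nat_mult) (simp add: algebra_simps)
        also have "\<dots> = of_nat (fact n') * (of_nat (Suc i) * B $ Suc i * (B ^ k') $ (n' - i))"
          by (simp only: nat_id of_nat_mult) (simp add: algebra_simps)
        finally show "of_nat (n' choose i) * F (Suc i) = of_nat (fact n') * (of_nat (Suc i) * B $ Suc i * (B ^ k') $ (n' - i))" .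
      qed
      also have "\<dots> = of_nat (fact n') * (of_nat (Suc n') * (B ^ Suc k') $ Suc n')"
        by (simp only: deriv_coeff sum_distrib_left[symmetric]) (simp add: algebra_simps)
      also have "\<dots> = of_nat (fact (card U)) * (B ^ k) $ card U"
        unfolding n' Suc fact_Suc of_nat_id of_nat_mult by (simp only: mult_ac)
      finally show ?thesis .
    qed
  qed
qed

end



definition Gw :: "(nat set \<Rightarrow> 'm set) \<Rightarrow> ((nat \<Rightarrow> nat) \<Rightarrow> nat set \<Rightarrow> 'm \<Rightarrow> 'm) \<Rightarrow> ((nat set \<times> 'm) set \<Rightarrow> 'a::comm_ring_1) \<Rightarrow> nat \<Rightarrow> 'a" where
  "Gw M rl w b = (\<Sum>m\<in>M {1..b}. w (tp rl {1..b} m))"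

definition ser :: "(nat set \<Rightarrow> 'm set) \<Rightarrow> ((nat \<Rightarrow> nat) \<Rightarrow> nat set \<Rightarrow> 'm \<Rightarrow> 'm) \<Rightarrow> ('k::field_char_0 \<Rightarrow> 'a::comm_ring_1)
    \<Rightarrow> ((nat set \<times> 'm) set \<Rightarrow> 'a) \<Rightarrow> 'a fps" where
  "ser M rl ofk w = Abs_fps (\<lambda>n. if n = 1 then 1 else if n \<ge> 2 then Gw M rl w n * ofk (1 / fact n) else 0)"

lemma Mser_ser: "Mser M rl ofk \<omega> = ser M rl ofk (\<lambda>\<alpha>. \<omega> (tvar M rl \<alpha>))"
  unfolding Mser_def ser_def Gw_def by (rule refl)

lemma ofk_of_nat: assumes "ring_hom_k ofk" shows "ofk (of_nat n) = of_nat n"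
proof (induction n)
  case 0
  have "ofk (0 + 0) = ofk 0 + ofk 0" using assms unfolding ring_hom_k_def by blast
  thus ?case by simp
next
  case (Suc n)
  have "ofk (1 + of_nat n) = ofk 1 + ofk (of_nat n)" using assms unfolding ring_hom_k_def by blast
  thus ?case using Suc assms by (simp add: ring_hom_k_def)
qed

lemma compM_Sigma: "compM M U = Sigma (Sigma {\<pi>. partition_on U \<pi>} (\<lambda>\<pi>. PiE \<pi> M)) (\<lambda>a. M (Min ` fst a))"
  by (auto simp: compM_def assemblies_def PiE_def Pi_def)

context
  fixes M :: "nat set \<Rightarrow> 'm set" and rl :: "(nat \<Rightarrow> nat) \<Rightarrow> nat set \<Rightarrow> 'm \<Rightarrow> 'm"
    and \<eta> :: "nat set set \<times> (nat set \<Rightarrow> 'm) \<Rightarrow> 'm \<Rightarrow> 'm"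
  assumes op: "set_operad M rl \<eta>"
begin

lemma Gw_card: "finite V \<Longrightarrow> Gw M rl w (card V) = (\<Sum>m\<in>M V. w (tp rl V m))"
  unfolding Gw_def by (rule sum_M_card[OF op_sp[OF op]]) auto

lemma ser_coeff:
  fixes ofk :: "'k::field_char_0 \<Rightarrow> 'a::comm_ring_1"
  assumes hk: "ring_hom_k ofk" and w1: "w (dot M rl) = 1"
  shows "of_nat (fact b) * ser M rl ofk w $ b = Gw M rl w b"
proof -
  consider "b = 0" | "b = 1" | "b \<ge> 2" by linarith
  thus ?thesis
  proof cases
    case 1 thus ?thesis by (simp add: ser_def Gw_def op_empty[OF op])
  next
    case 2
    obtain e where e: "M {1} = {e}" using op_single[OF op, of 1] by blast
    thus ?thesis using 2 w1 by (simp add: ser_def Gw_def dot_def)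
  next
    case 3
    have m: "ofk (x * y) = ofk x * ofk y" for x y using hk unfolding ring_hom_k_def by blast
    have fb: "ofk (fact b) = of_nat (fact b)" using ofk_of_nat[OF hk, of "fact b"] by (simp add: of_nat_fact)
    have "of_nat (fact b) * ofk (1 / fact b) = ofk (fact b * (1 / fact b))"
      by (simp only: m fb)
    also have "fact b * (1 / fact b) = (1::'k)" by simp
    also have "ofk 1 = 1" using hk unfolding ring_hom_k_def by blast
    finally have "of_nat (fact b) * ofk (1 / fact b) = 1" .
    hence "of_nat (fact b) * (Gw M rl w b * ofk (1 / fact b)) = Gw M rl w b"
      by (metis mult.left_commute mult.right_neutral)
    thus ?thesis using 3 by (simp add: ser_def)
  qed
qed

lemma ser0: "ser M rl ofk w $ 0 = 0" by (simp add: ser_def)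
lemma ser1: "ser M rl ofk w $ 1 = 1" by (simp add: ser_def)

lemma compose_formula:
  assumes hk: "ring_hom_k ofk" and a1: "wA (dot M rl) = 1" and b1: "wB (dot M rl) = 1" and fU: "finite U"
  shows "of_nat (fact (card U)) * (ser M rl ofk wA oo ser M rl ofk wB) $ card U
       = (\<Sum>x\<in>compM M U. wtg rl wB wA x)"
proof -
  let ?A = "ser M rl ofk wA" and ?B = "ser M rl ofk wB" and ?n = "card U"
  let ?GA = "Gw M rl wA" and ?GB = "Gw M rl wB"
  let ?P = "\<lambda>k. (\<Sum>\<pi>\<in>Parts U k. \<Prod>C\<in>\<pi>. ?GB (card C))"
  have ps: "of_nat (fact k) * ?P k = of_nat (fact ?n) * (?B ^ k) $ ?n" for k
    by (rule part_sum[OF ser0 ser_coeff[where w=wB, OF hk b1] fU])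
  have "of_nat (fact ?n) * (?A oo ?B) $ ?n = (\<Sum>k=0..?n. ?A $ k * (of_nat (fact ?n) * (?B ^ k) $ ?n))"
    by (simp add: fps_compose_nth sum_distrib_left algebra_simps)
  also have "\<dots> = (\<Sum>k=0..?n. (of_nat (fact k) * ?A $ k) * ?P k)"
    by (simp only: ps[symmetric] mult_ac)
  also have "\<dots> = (\<Sum>k=0..?n. ?GA k * ?P k)"
    by (simp only: ser_coeff[where w=wA, OF hk a1])
  also have "\<dots> = (\<Sum>k=0..?n. \<Sum>\<pi>\<in>Parts U k. ?GA (card \<pi>) * (\<Prod>C\<in>\<pi>. ?GB (card C)))"
    by (simp add: sum_distrib_left)
  also have "\<dots> = (\<Sum>\<pi>\<in>{\<pi>. partition_on U \<pi>}. ?GA (card \<pi>) * (\<Prod>C\<in>\<pi>. ?GB (card C)))"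
  proof -
    have fP: "finite {\<pi>. partition_on U \<pi>}" using finitely_many_partition_on[OF fU] .
    have img: "card ` {\<pi>. partition_on U \<pi>} \<subseteq> {0..?n}"
    proof
      fix k assume "k \<in> card ` {\<pi>. partition_on U \<pi>}"
      then obtain \<pi> where p: "partition_on U \<pi>" "k = card \<pi>" by blast
      have "card \<pi> \<le> card U"
      proof (cases "\<pi> = (\<lambda>u. {u}) ` U")
        case True thus ?thesis by (simp add: card_image_le fU)
      next
        case False thus ?thesis using part_card_lt[OF fU p(1)] by simp
      qed
      thus "k \<in> {0..?n}" using p by simp
    qed
    show ?thesis using sum.group[OF fP _ img, of "\<lambda>\<pi>. ?GA (card \<pi>) * (\<Prod>C\<in>\<pi>. ?GB (card C))"]
      by (simp add: conj_commute)
  qed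
  also have "\<dots> = (\<Sum>\<pi>\<in>{\<pi>. partition_on U \<pi>}. \<Sum>f\<in>PiE \<pi> M. \<Sum>m'\<in>M (Min ` \<pi>). wtg rl wB wA ((\<pi>, f), m'))"
  proof (rule sum.cong[OF refl])
    fix \<pi> assume "\<pi> \<in> {\<pi>. partition_on U \<pi>}"
    hence p: "partition_on U \<pi>" by simp
    have f\<pi>: "finite \<pi>" using part_finite[OF fU p] .
    have "?GA (card \<pi>) = (\<Sum>m'\<in>M (Min ` \<pi>). wA (tp rl (Min ` \<pi>) m'))"
      using Gw_card[of "Min ` \<pi>" wA] card_image[OF part_Min_inj[OF fU p]] f\<pi> by simp
    moreover have "(\<Prod>C\<in>\<pi>. ?GB (card C)) = (\<Prod>C\<in>\<pi>. \<Sum>m\<in>M C. wB (tp rl C m))"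
      using Gw_card part_fin[OF fU p] by (intro prod.cong) auto
    moreover have "\<dots> = (\<Sum>f\<in>PiE \<pi> M. \<Prod>C\<in>\<pi>. wB (tp rl C (f C)))"
      by (rule prod_sum_PiE[OF f\<pi>]) (use op_fin[OF op] part_fin[OF fU p] in auto)
    ultimately show "?GA (card \<pi>) * (\<Prod>C\<in>\<pi>. ?GB (card C)) = (\<Sum>f\<in>PiE \<pi> M. \<Sum>m'\<in>M (Min ` \<pi>). wtg rl wB wA ((\<pi>, f), m'))"
      by (simp add: wtg_eq sum_distrib_left sum_distrib_right mult.commute)
  qed
  also have "\<dots> = (\<Sum>x\<in>compM M U. wtg rl wB wA x)"
  proof -
    have fP: "finite {\<pi>. partition_on U \<pi>}" using finitely_many_partition_on[OF fU] .
    have fPi: "finite (PiE \<pi> M)" if "partition_on U \<pi>" for \<pi>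
      using that by (intro finite_PiE) (auto intro: part_finite[OF fU] op_fin[OF op] part_fin[OF fU])
    have fS: "finite (Sigma {\<pi>. partition_on U \<pi>} (\<lambda>\<pi>. PiE \<pi> M))" using fP fPi by auto
    have fM: "\<forall>a\<in>Sigma {\<pi>. partition_on U \<pi>} (\<lambda>\<pi>. PiE \<pi> M). finite (M (Min ` fst a))"
      using op_fin[OF op] part_finite[OF fU] by auto
    have "(\<Sum>a\<in>Sigma {\<pi>. partition_on U \<pi>} (\<lambda>\<pi>. PiE \<pi> M). \<Sum>m'\<in>M (Min ` fst a). wtg rl wB wA (a, m'))
        = (\<Sum>(a, m')\<in>compM M U. wtg rl wB wA (a, m'))"
      unfolding compM_Sigma by (rule sum.Sigma[OF fS fM])
    hence "(\<Sum>x\<in>compM M U. wtg rl wB wA x) = (\<Sum>a\<in>Sigma {\<pi>. partition_on U \<pi>} (\<lambda>\<pi>. PiE \<pi> M). \<Sum>m'\<in>M (Min ` fst a). wtg rl wB wA (a, m'))"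
      by (simp add: case_prod_beta')
    also have "\<dots> = (\<Sum>\<pi>\<in>{\<pi>. partition_on U \<pi>}. \<Sum>f\<in>PiE \<pi> M. \<Sum>m'\<in>M (Min ` \<pi>). wtg rl wB wA ((\<pi>, f), m'))"
      using sum.Sigma[symmetric, OF fP, of "\<lambda>\<pi>. PiE \<pi> M" "\<lambda>\<pi> f. \<Sum>m'\<in>M (Min ` \<pi>). wtg rl wB wA ((\<pi>, f), m')"] fPi
      by (simp add: split_def)
    finally show ?thesis by simp
  qed
  finally show ?thesis .
qed

end



section \<open>Composition associativity over commutative rings\<close>

lemma product_composition_lemma':
  assumes c0: "c$0 = (0::'a::comm_ring_1)"
    and d0: "d$0 = 0"
  shows "((a oo c) * (b oo d))$n =
    sum (\<lambda>(k,m). a$k * b$m * (c^k * d^m) $ n) {(k,m). k + m \<le> n}"  (is "?l = ?r")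
proof -
  let ?S = "{(k::nat, m::nat). k + m \<le> n}"
  have s: "?S \<subseteq> {0..n} \<times> {0..n}" by (simp add: subset_eq)
  have f: "finite {(k::nat, m::nat). k + m \<le> n}"
    by (auto intro: finite_subset[OF s])
  have "?r = (\<Sum>(k, m) \<in> {(k, m). k + m \<le> n}. \<Sum>j = 0..n. a $ k * b $ m * (c ^ k $ j * d ^ m $ (n - j)))"
    by (simp add: fps_mult_nth sum_distrib_left)
  also have "\<dots> = (\<Sum>i = 0..n. \<Sum>(k,m)\<in>{(k,m). k+m \<le> n}. a $ k * c ^ k $ i * b $ m * d ^ m $ (n-i))"
    unfolding sum.swap [where A = "{0..n}"] by (auto simp add: algebra_simps intro: sum.cong)
  also have "... = (\<Sum>i = 0..n.
                    \<Sum>q = 0..i. \<Sum>j = 0..n - i. a $ q * c ^ q $ i * (b $ j * d ^ j $ (n - i)))"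
    apply (rule sum.cong [OF refl])
    apply (simp add: sum.cartesian_product mult.assoc)
    apply (rule sum.mono_neutral_right[OF f], force)
    by clarsimp (metis c0 d0 leI startsby_zero_power_prefix mult_zero_left mult_zero_right diff_le_mono2 le_diff_conv2 add.commute)
  also have "\<dots> = ?l"
    by (simp add: fps_mult_nth fps_compose_nth sum_product)
  finally show ?thesis by simp
qed

lemma fps_compose_mult_distrib':
  assumes c0: "c $ 0 = (0::'a::comm_ring_1)"
  shows "(a * b) oo c = (a oo c) * (b oo c)"
proof (clarsimp simp add: fps_eq_iff)
  fix n
  have "((a oo c) * (b oo c))$n = sum (\<lambda>s. sum (\<lambda>i. a$i * b$(s - i) * (c^s) $ n) {0..s}) {0..n}"
    unfolding product_composition_lemma'[OF c0 c0] power_add[symmetric]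
    unfolding sum_pair_less_iff[where a = "\<lambda>k. a$k" and b="\<lambda>m. b$m" and c="\<lambda>s. (c ^ s)$n" and n = n] ..
  moreover have "(a * b oo c) $ n = (\<Sum>s = 0..n. \<Sum>i = 0..s. a $ i * b $ (s - i) * c ^ s $ n)"
    by (simp add: fps_compose_nth fps_mult_nth sum_distrib_right)
  ultimately show "(a * b oo c) $ n = ((a oo c) * (b oo c)) $ n" by simp
qed

lemma fps_compose_power':
  assumes c0: "c$0 = (0::'a::comm_ring_1)"
  shows "(a oo c)^n = a^n oo c"
proof (induction n)
  case 0 thus ?case by (simp add: fps_eq_iff fps_compose_nth)
next
  case (Suc n) thus ?case by (simp add: fps_compose_mult_distrib'[OF c0])
qed

lemma fps_compose_assoc':
  assumes c0: "c$0 = (0::'a::comm_ring_1)"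
    and b0: "b$0 = 0"
  shows "a oo (b oo c) = a oo b oo c" (is "?l = ?r")
proof -
  have "?l$n = ?r$n" for n
  proof -
    have "?l$n = (sum (\<lambda>i. (fps_const (a$i) * b^i) oo c) {0..n})$n"
      by (simp add: fps_compose_nth fps_compose_power'[OF c0] fps_const_mult_apply_left
        sum_distrib_left mult.assoc fps_sum_nth)
    also have "\<dots> = ((sum (\<lambda>i. fps_const (a$i) * b^i) {0..n}) oo c)$n"
      by (simp add: fps_compose_sum_distrib)
    also have "... = (\<Sum>i = 0..n. \<Sum>j = 0..n. a $ j * (b ^ j $ i * c ^ i $ n))"
      by (simp add: fps_compose_nth fps_sum_nth sum_distrib_right mult.assoc)
    also have "... = (\<Sum>i = 0..n. \<Sum>j = 0..i. a $ j * (b ^ j $ i * c ^ i $ n))"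
      by (intro sum.cong [OF refl] sum.mono_neutral_right; simp add: b0 startsby_zero_power_prefix)
    also have "\<dots> = ?r$n"
      by (simp add: fps_compose_nth  sum_distrib_right mult.assoc)
    finally show ?thesis .
  qed
  then show ?thesis
    by (simp add: fps_eq_iff)
qed

lemma fps_compose_zero_cancel:
  fixes D B :: "'a::comm_ring_1 fps"
  assumes B0: "B$0 = 0" and B1: "B$1 = 1" and z: "D oo B = 0"
  shows "D = 0"
proof -
  have "D $ k = 0" for k
  proof (induction k rule: less_induct)
    case (less k)
    have "0 = (D oo B) $ k" using z by simp
    also have "\<dots> = (\<Sum>i=0..k. D $ i * (B ^ i) $ k)" by (rule fps_compose_nth)
    also have "\<dots> = (\<Sum>i\<in>{k}. D $ i * (B ^ i) $ k)"
      by (rule sum.mono_neutral_right) (auto simp: less.IH)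
    also have "\<dots> = D $ k * (B ^ k) $ k" by simp
    also have "\<dots> = D $ k" using startsby_zero_power_nth_same[OF B0, of k] B1 by simp
    finally show ?case by simp
  qed
  thus ?thesis by (simp add: fps_eq_iff)
qed

lemma left_inv_right_inv:
  fixes A B :: "'a::comm_ring_1 fps"
  assumes A0: "A$0 = 0" and B0: "B$0 = 0" and B1: "B$1 = 1" and AB: "A oo B = fps_X"
  shows "B oo A = fps_X"
proof -
  have "(B oo A) oo B = B oo (A oo B)" by (rule fps_compose_assoc'[OF B0 A0, symmetric])
  also have "\<dots> = B" using AB by simp
  also have "\<dots> = fps_X oo B" using B0 by simp
  finally have "((B oo A) - fps_X) oo B = 0" by (simp only: fps_compose_sub_distrib diff_self)
  hence "(B oo A) - fps_X = 0" by (rule fps_compose_zero_cancel[OF B0 B1])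
  thus ?thesis by simp
qed



lemma fact_unit:
  fixes ofk :: "'k::field_char_0 \<Rightarrow> 'a::comm_ring_1"
  assumes hk: "ring_hom_k ofk"
  shows "of_nat (fact n) * ofk (1 / fact n) = 1"
proof -
  have m: "ofk (x * y) = ofk x * ofk y" for x y using hk unfolding ring_hom_k_def by blast
  have fb: "ofk (fact n) = of_nat (fact n)" using ofk_of_nat[OF hk, of "fact n"] by (simp add: of_nat_fact)
  have "of_nat (fact n) * ofk (1 / fact n) = ofk (fact n * (1 / fact n))"
    by (simp only: m fb)
  also have "fact n * (1 / fact n) = (1::'k)" by simp
  also have "ofk 1 = 1" using hk unfolding ring_hom_k_def by blast
  finally show ?thesis .
qed

lemma ring_hom_pconst: "ring_hom_k (pconst :: 'k::comm_ring_1 \<Rightarrow> ('v, 'k) mpoly)"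
  by (simp add: ring_hom_k_def pconst_add pconst_mult)

lemma alg_hom_id: "alg_hom_on N pconst (\<lambda>p. p)"
  by (simp add: alg_hom_on_def)

context
  fixes M :: "nat set \<Rightarrow> 'm set" and rl :: "(nat \<Rightarrow> nat) \<Rightarrow> nat set \<Rightarrow> 'm \<Rightarrow> 'm"
    and \<eta> :: "nat set set \<times> (nat set \<Rightarrow> 'm) \<Rightarrow> 'm \<Rightarrow> 'm"
  assumes op: "set_operad M rl \<eta>"
begin

lemma inv_pair:
  fixes ofk :: "'k::field_char_0 \<Rightarrow> 'a::comm_ring_1"
    and \<omega> :: "((nat set \<times> 'm) set, 'k) mpoly \<Rightarrow> 'a"
    and S :: "((nat set \<times> 'm) set, 'k) mpoly \<Rightarrow> ((nat set \<times> 'm) set, 'k) mpoly"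
  assumes hk: "ring_hom_k ofk" and ah: "alg_hom_on (NM M rl) ofk \<omega>" and S: "is_antipode M rl \<eta> S"
  shows "Mser M rl ofk \<omega> oo Mser M rl ofk (\<omega> \<circ> S) = fps_X \<and> Mser M rl ofk (\<omega> \<circ> S) oo Mser M rl ofk \<omega> = fps_X"
proof -
  let ?wA = "\<lambda>\<alpha>. \<omega> (tvar M rl \<alpha>)" and ?wB = "\<lambda>\<alpha>. (\<omega> \<circ> S) (tvar M rl \<alpha>)"
  let ?A = "ser M rl ofk ?wA" and ?B = "ser M rl ofk ?wB"
  have A: "Mser M rl ofk \<omega> = ?A" and B: "Mser M rl ofk (\<omega> \<circ> S) = ?B" by (rule Mser_ser)+
  note NMa = NM_alg[where M=M and rl=rl]
  have om1: "\<omega> 1 = 1" using ah_one[OF ah NMa] .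
  have SNM: "S ` NM M rl \<subseteq> NM M rl" and Sah: "alg_hom_on (NM M rl) pconst S"
    using S by (auto simp: is_antipode_def)
  have S1: "S 1 = 1" using Sah by (simp add: alg_hom_on_def)
  have a1: "?wA (dot M rl) = 1" using om1 by (simp add: tvar_def)
  have b1: "?wB (dot M rl) = 1" using om1 S1 by (simp add: tvar_def)
  have StNM: "S (tvar M rl \<beta>) \<in> NM M rl" if "\<beta> \<in> types M rl" for \<beta>
    using SNM NM_tvar[OF that] by blast
  have wt_eq: "wtg rl ?wB ?wA x = \<omega> (wtg rl (\<lambda>\<beta>. S (tvar M rl \<beta>)) (tvar M rl) x)" if x: "x \<in> compM M U" and fU: "finite U" for x U
  proof -
    obtain \<pi> f m' where x': "x = ((\<pi>, f), m')" by (metis prod.exhaust)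
    have p: "partition_on U \<pi>" and fM: "\<forall>B\<in>\<pi>. f B \<in> M B" and m': "m' \<in> M (Min ` \<pi>)"
      using x x' by (auto simp: compM_iff)
    have bt: "tp rl B (f B) \<in> types M rl" if "B \<in> \<pi>" for B
      using types_I[OF op part_fin[OF fU p that]] fM that by blast
    have ot: "tp rl (Min ` \<pi>) m' \<in> types M rl" using types_I[OF op _ m'] part_finite[OF fU p] by simp
    have pNM: "(\<Prod>B\<in>\<pi>. S (tvar M rl (tp rl B (f B)))) \<in> NM M rl"
      using bt StNM by (intro NM_prod) auto
    have "\<omega> ((\<Prod>B\<in>\<pi>. S (tvar M rl (tp rl B (f B)))) * tvar M rl (tp rl (Min ` \<pi>) m'))
        = (\<Prod>B\<in>\<pi>. \<omega> (S (tvar M rl (tp rl B (f B))))) * \<omega> (tvar M rl (tp rl (Min ` \<pi>) m'))"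
      using ah_mult[OF ah NMa pNM NM_tvar[OF ot]] ah_prod[OF ah NMa, of \<pi> "\<lambda>B. S (tvar M rl (tp rl B (f B)))"] bt StNM
      by simp
    thus ?thesis unfolding x' wtg_eq by simp
  qed
  have AB: "?A oo ?B = fps_X"
  proof (rule fps_ext)
    fix n :: nat
    consider "n = 0" | "n = 1" | "n \<ge> 2" by linarith
    thus "(?A oo ?B) $ n = fps_X $ n"
    proof cases
      case 1 thus ?thesis by (simp add: ser0[OF op])
    next
      case 2 thus ?thesis by (simp add: fps_compose_nth ser0[OF op] ser_def)
    next
      case 3
      let ?U = "{1..n}"
      have fU: "finite ?U" by simp
      have cU: "card ?U = n" by simp
      have "of_nat (fact n) * (?A oo ?B) $ n = (\<Sum>x\<in>compM M ?U. wtg rl ?wB ?wA x)"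
        using compose_formula[OF op hk, where wA="?wA" and wB="?wB", OF a1 b1 fU] cU by simp
      also have "\<dots> = (\<Sum>m\<in>M ?U. \<Sum>x\<in>{x \<in> compM M ?U. case_prod \<eta> x = m}. wtg rl ?wB ?wA x)"
      proof (rule sum.group[symmetric])
        show "finite (compM M ?U)" using compM_fin[OF op fU] .
        show "finite (M ?U)" using op_fin[OF op fU] .
        show "case_prod \<eta> ` compM M ?U \<subseteq> M ?U" using op_eta[OF op fU] by auto
      qed
      also have "\<dots> = 0"
      proof (rule sum.neutral, rule ballI)
        fix m assume m: "m \<in> M ?U"
        have "(\<Sum>x\<in>{x \<in> compM M ?U. case_prod \<eta> x = m}. wtg rl ?wB ?wA x)
            = (\<Sum>x\<in>Sset M \<eta> ?U m. \<omega> (wtg rl (\<lambda>\<beta>. S (tvar M rl \<beta>)) (tvar M rl) x))"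
          unfolding Sset_def using wt_eq fU by (intro sum.cong) auto
        also have "\<dots> = \<omega> (\<Sum>x\<in>Sset M \<eta> ?U m. wtg rl (\<lambda>\<beta>. S (tvar M rl \<beta>)) (tvar M rl) x)"
        proof (rule ah_sum[OF ah NMa, symmetric])
          fix x assume x: "x \<in> Sset M \<eta> ?U m"
          obtain \<pi> f m' where x': "x = ((\<pi>, f), m')" by (metis prod.exhaust)
          have p: "partition_on ?U \<pi>" and fM: "\<forall>B\<in>\<pi>. f B \<in> M B" and m': "m' \<in> M (Min ` \<pi>)"
            using x x' by (auto simp: Sset_def compM_iff)
          have bt: "tp rl B (f B) \<in> types M rl" if "B \<in> \<pi>" for B
            using types_I[OF op part_fin[OF fU p that]] fM that by blast
          have ot: "tp rl (Min ` \<pi>) m' \<in> types M rl" using types_I[OF op _ m'] part_finite[OF fU p] by simp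
          show "wtg rl (\<lambda>\<beta>. S (tvar M rl \<beta>)) (tvar M rl) x \<in> NM M rl"
            unfolding x' wtg_eq using bt StNM ot by (intro NM_mult NM_prod NM_tvar) auto
        qed
        also have "(\<Sum>x\<in>Sset M \<eta> ?U m. wtg rl (\<lambda>\<beta>. S (tvar M rl \<beta>)) (tvar M rl) x) = 0"
          using antipode_Sset_zero[OF op S fU m] 3 by simp
        finally show "(\<Sum>x\<in>{x \<in> compM M ?U. case_prod \<eta> x = m}. wtg rl ?wB ?wA x) = 0"
          using ah_zero[OF ah NMa] by simp
      qed
      finally have z: "of_nat (fact n) * (?A oo ?B) $ n = 0" .
      have "(?A oo ?B) $ n = (of_nat (fact n) * ofk (1 / fact n)) * (?A oo ?B) $ n"
        using fact_unit[OF hk, of n] by simp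
      also have "\<dots> = ofk (1 / fact n) * (of_nat (fact n) * (?A oo ?B) $ n)" by (simp only: mult_ac)
      finally show ?thesis using z 3 by simp
    qed
  qed
  have BA: "?B oo ?A = fps_X"
    by (rule left_inv_right_inv[OF ser0[OF op] ser0[OF op] ser1[OF op] AB])
  show ?thesis using AB BA A B by simp
qed

end

theorem mainTheorem4:
  fixes M :: "nat set \<Rightarrow> 'm set"
    and rl :: "(nat \<Rightarrow> nat) \<Rightarrow> nat set \<Rightarrow> 'm \<Rightarrow> 'm"
    and \<eta> :: "nat set set \<times> (nat set \<Rightarrow> 'm) \<Rightarrow> 'm \<Rightarrow> 'm"
    and ofk :: "'k::field_char_0 \<Rightarrow> 'a::comm_ring_1"
    and \<omega> :: "((nat set \<times> 'm) set, 'k) mpoly \<Rightarrow> 'a"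
  assumes "set_operad M rl \<eta>"
    and "ring_hom_k ofk"
    and "alg_hom_on (NM M rl) ofk \<omega>"
  shows "(\<exists>S :: ((nat set \<times> 'm) set, 'k) mpoly \<Rightarrow> ((nat set \<times> 'm) set, 'k) mpoly. is_antipode M rl \<eta> S) \<and>
    (\<forall>S. is_antipode M rl \<eta> S \<longrightarrow>
       Mser M rl ofk \<omega> oo Mser M rl ofk (\<omega> \<circ> S) = fps_X \<and>
       Mser M rl ofk (\<omega> \<circ> S) oo Mser M rl ofk \<omega> = fps_X \<and>
       Mser M rl pconst S oo Mser M rl pconst (\<lambda>p. p) = fps_X \<and>
       Mser M rl pconst (\<lambda>p. p) oo Mser M rl pconst S = fps_X)"
proof (intro conjI allI impI)
  show "\<exists>S :: ((nat set \<times> 'm) set, 'k) mpoly \<Rightarrow> ((nat set \<times> 'm) set, 'k) mpoly. is_antipode M rl \<eta> S"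
    using Smap_antipode[OF assms(1)] by blast
  fix S :: "((nat set \<times> 'm) set, 'k) mpoly \<Rightarrow> ((nat set \<times> 'm) set, 'k) mpoly"
  assume S: "is_antipode M rl \<eta> S"
  have p1: "Mser M rl ofk \<omega> oo Mser M rl ofk (\<omega> \<circ> S) = fps_X \<and> Mser M rl ofk (\<omega> \<circ> S) oo Mser M rl ofk \<omega> = fps_X"
    by (rule inv_pair[OF assms(1,2,3) S])
  have p2: "Mser M rl pconst (\<lambda>p. p) oo Mser M rl pconst ((\<lambda>p. p) \<circ> S) = fps_X \<and>
            Mser M rl pconst ((\<lambda>p. p) \<circ> S) oo Mser M rl pconst (\<lambda>p. p) = fps_X"
    by (rule inv_pair[OF assms(1) ring_hom_pconst alg_hom_id S])
  have e: "(\<lambda>p. p) \<circ> S = S" by (simp add: comp_def)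
  show "Mser M rl ofk \<omega> oo Mser M rl ofk (\<omega> \<circ> S) = fps_X" using p1 by blast
  show "Mser M rl ofk (\<omega> \<circ> S) oo Mser M rl ofk \<omega> = fps_X" using p1 by blast
  show "Mser M rl pconst S oo Mser M rl pconst (\<lambda>p. p) = fps_X" using p2 e by simp
  show "Mser M rl pconst (\<lambda>p. p) oo Mser M rl pconst S = fps_X" using p2 e by simp
qed


end
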